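(* For every twin-free forest $F$ of order $n \ge 2$, we have $i_{\max}(F) \ge f(n-1)$.
   Context: $i_{\max}(F)$ denotes the number of maximal independent sets of $F$. A graph is twin-free if no two vertices have the same open neighbourhood. The function $f$ is defined by $f(1)=1$, $f(2)=f(3)=2$, and for $n\ge 4$: $f(n)=4\cdot 3^{n/5-1}$ if $n\equiv 0 \pmod 5$; $5\cdot 3^{(n-6)/5}$ if $n\equiv 1$; $2\cdot 3^{(n-2)/5}$ if $n\equiv 2$; $8\cdot 3^{(n-8)/5}$ if $n\equiv 3$; $3^{(n+1)/5}$ if $n\equiv 4 \pmod 5$. *)

theory Defs
  imports Main
begin

definition simple_graph :: "'a set \<Rightarrow> ('a \<Rightarrow> 'a \<Rightarrow> bool) \<Rightarrow> bool" where
  "simple_graph V E \<longleftrightarrow> finite V \<and> (\<forall>x y. E x y \<longrightarrow> x \<in> V \<and> y \<in> V)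
     \<and> (\<forall>x y. E x y \<longrightarrow> E y x) \<and> (\<forall>x. \<not> E x x)"

definition is_cycle :: "'a set \<Rightarrow> ('a \<Rightarrow> 'a \<Rightarrow> bool) \<Rightarrow> 'a list \<Rightarrow> bool" where
  "is_cycle V E cs \<longleftrightarrow> length cs \<ge> 3 \<and> distinct cs \<and> set cs \<subseteq> V
     \<and> (\<forall>i. Suc i < length cs \<longrightarrow> E (cs ! i) (cs ! Suc i))
     \<and> E (last cs) (hd cs)"

definition forest :: "'a set \<Rightarrow> ('a \<Rightarrow> 'a \<Rightarrow> bool) \<Rightarrow> bool" where
  "forest V E \<longleftrightarrow> simple_graph V E \<and> (\<nexists>cs. is_cycle V E cs)"

definition open_nbhd :: "'a set \<Rightarrow> ('a \<Rightarrow> 'a \<Rightarrow> bool) \<Rightarrow> 'a \<Rightarrow> 'a set" where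
  "open_nbhd V E v = {u \<in> V. E v u}"

definition twin_free :: "'a set \<Rightarrow> ('a \<Rightarrow> 'a \<Rightarrow> bool) \<Rightarrow> bool" where
  "twin_free V E \<longleftrightarrow> (\<forall>u\<in>V. \<forall>v\<in>V. u \<noteq> v \<longrightarrow> open_nbhd V E u \<noteq> open_nbhd V E v)"

definition independent :: "'a set \<Rightarrow> ('a \<Rightarrow> 'a \<Rightarrow> bool) \<Rightarrow> 'a set \<Rightarrow> bool" where
  "independent V E S \<longleftrightarrow> S \<subseteq> V \<and> (\<forall>x\<in>S. \<forall>y\<in>S. \<not> E x y)"

definition maximal_independent :: "'a set \<Rightarrow> ('a \<Rightarrow> 'a \<Rightarrow> bool) \<Rightarrow> 'a set \<Rightarrow> bool" where
  "maximal_independent V E S \<longleftrightarrow> independent V E S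
     \<and> (\<forall>T. independent V E T \<longrightarrow> S \<subseteq> T \<longrightarrow> T = S)"

definition i_max :: "'a set \<Rightarrow> ('a \<Rightarrow> 'a \<Rightarrow> bool) \<Rightarrow> nat" where
  "i_max V E = card {S. maximal_independent V E S}"

text \<open>The function f from the paper (n \<ge> 1; f 0 is irrelevant and set to 0).\<close>

definition f :: "nat \<Rightarrow> nat" where
  "f n = (if n = 0 then 0 else if n = 1 then 1 else if n = 2 \<or> n = 3 then 2
     else if n mod 5 = 0 then 4 * 3 ^ (n div 5 - 1)
     else if n mod 5 = 1 then 5 * 3 ^ ((n - 6) div 5)
     else if n mod 5 = 2 then 2 * 3 ^ ((n - 2) div 5)
     else if n mod 5 = 3 then 8 * 3 ^ ((n - 8) div 5)
     else 3 ^ ((n + 1) div 5))"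

end

theory Submission
  imports Defs
begin



lemma f_rec: assumes "m \<ge> 9" shows "f m = 3 * f (m - 5)"
proof -
  define p where "p = m div 5 - 1"
  define r where "r = m mod 5"
  have r: "r < 5" unfolding r_def by simp
  have "m = 5 * (m div 5) + m mod 5" by simp
  moreover have "m div 5 \<ge> 1" using assms by linarith
  ultimately have mm: "m = 5 * p + r + 5" unfolding p_def r_def by linarith
  show ?thesis
  proof (cases p)
    case 0
    then have "m = 9" using mm r assms by linarith
    then show ?thesis by (simp add: f_def)
  next
    case (Suc k)
    have m5: "m - 5 = 5 * k + r + 5" using mm Suc by simp
    have m10: "m = 5 * k + r + 10" using mm Suc by simp
    have "r = 0 \<or> r = 1 \<or> r = 2 \<or> r = 3 \<or> r = 4" using r by linarith
    then show ?thesis unfolding m5 unfolding m10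
      by (elim disjE) (simp_all add: f_def power_add)
  qed
qed


definition g :: "nat \<Rightarrow> nat" where
 "g m = (if m = 0 then 1 else if m = 1 then 2 else if m = 3 then 3 else f m)"

lemma g_small: "g 0 = 1" "g 1 = 2" "g 2 = 2" "g 3 = 3" "g 4 = 3" "g 5 = 4" "g 6 = 5" "g 7 = 6"
  "g (Suc 0) = 2" "g (Suc (Suc 0)) = 2" "g 16 = 45" "g 8 = 8" "g 9 = 9" "g 10 = 12" "g 11 = 15" "g 12 = 18" "g 13 = 24" "g 14 = 27" "g 15 = 36"
  by (simp_all add: g_def f_def)

lemma lt16: "(m::nat) < 16 \<Longrightarrow> m = 0 \<or> m = 1 \<or> m = 2 \<or> m = 3 \<or> m = 4 \<or> m = 5 \<or> m = 6 \<or> m = 7 \<or> m = 8 \<or> m = 9 \<or> m = 10 \<or> m = 11 \<or> m = 12 \<or> m = 13 \<or> m = 14 \<or> m = 15"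
  by presburger

lemma g_rec: assumes "m \<ge> 9" shows "g m = 3 * g (m - 5)"
proof -
  have "g m = f m" "g (m - 5) = f (m - 5)" using assms by (auto simp: g_def)
  then show ?thesis using f_rec[OF assms] by simp
qed

lemma g_shift: assumes "m \<ge> 16" "a \<le> 7" shows "g (m - a) = 3 * g (m - 5 - a)"
  using g_rec[of "m - a"] assms by (simp add: algebra_simps)

lemma f_le_g: "f m \<le> g m"
  by (simp add: g_def f_def)

lemma g_mono_Suc: "g m \<le> g (Suc m)"
proof (induction m rule: less_induct)
  case (less m)
  show ?case
  proof (cases "m < 16")
    case True then show ?thesis using lt16[OF True] by (elim disjE) (simp_all add: g_small)
  next
    case False
    have e: "Suc m - 5 = Suc (m - 5)" using False by simp
    have "g m = 3 * g (m - 5)" "g (Suc m) = 3 * g (Suc m - 5)"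
      using g_shift[of m 0] g_shift[of "Suc m" 0] False by simp_all
    then have "g m = 3 * g (m - 5)" "g (Suc m) = 3 * g (Suc (m - 5))" unfolding e by simp_all
    moreover have "g (m - 5) \<le> g (Suc (m - 5))" using less.IH[of "m - 5"] False by simp
    ultimately show ?thesis by simp
  qed
qed

lemma g_mono: "a \<le> b \<Longrightarrow> g a \<le> g b"
  by (induction b) (auto simp: le_Suc_eq intro: le_trans[OF _ g_mono_Suc])

lemma g_K2: "g m \<le> 2 * g (m - 2)"
proof (induction m rule: less_induct)
  case (less m)
  show ?case
  proof (cases "m < 16")
    case True then show ?thesis using lt16[OF True] by (elim disjE) (simp_all add: g_small)
  next
    case False
    then have "g m = 3 * g (m - 5)" "g (m - 2) = 3 * g (m - 5 - 2)"
      using g_shift[of m 0] g_shift[of m 2] by simp_all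
    moreover have "g (m - 5) \<le> 2 * g (m - 5 - 2)" using less.IH[of "m - 5"] False by simp
    ultimately show ?thesis by simp
  qed
qed

lemma g_A: "g m \<le> g (m - 2) + 2 * g (m - 7)"
proof (induction m rule: less_induct)
  case (less m)
  show ?case
  proof (cases "m < 16")
    case True then show ?thesis using lt16[OF True] by (elim disjE) (simp_all add: g_small)
  next
    case False
    then have "g m = 3 * g (m - 5)" "g (m - 2) = 3 * g (m - 5 - 2)" "g (m - 7) = 3 * g (m - 5 - 7)"
      using g_shift[of m 0] g_shift[of m 2] g_shift[of m 7] by simp_all
    moreover have "g (m - 5) \<le> g (m - 5 - 2) + 2 * g (m - 5 - 7)" using less.IH[of "m - 5"] False by simp
    ultimately show ?thesis by simp
  qed
qed

lemma g_B1: "g m \<le> g (m - 2) + g (m - 4)"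
proof (induction m rule: less_induct)
  case (less m)
  show ?case
  proof (cases "m < 16")
    case True then show ?thesis using lt16[OF True] by (elim disjE) (simp_all add: g_small)
  next
    case False
    then have "g m = 3 * g (m - 5)" "g (m - 2) = 3 * g (m - 5 - 2)" "g (m - 4) = 3 * g (m - 5 - 4)"
      using g_shift[of m 0] g_shift[of m 2] g_shift[of m 4] by simp_all
    moreover have "g (m - 5) \<le> g (m - 5 - 2) + g (m - 5 - 4)" using less.IH[of "m - 5"] False by simp
    ultimately show ?thesis by simp
  qed
qed

lemma g_B2: "m \<ge> 4 \<Longrightarrow> g m \<le> 2 * g (m - 3)"
proof (induction m rule: less_induct)
  case (less m)
  show ?case
  proof (cases "m < 16")
    case True then show ?thesis using less.prems lt16[OF True] by (elim disjE) (simp_all add: g_small)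
  next
    case False
    then have "g m = 3 * g (m - 5)" "g (m - 3) = 3 * g (m - 5 - 3)"
      using g_shift[of m 0] g_shift[of m 3] by simp_all
    moreover have "g (m - 5) \<le> 2 * g (m - 5 - 3)" using less.IH[of "m - 5"] False by simp
    ultimately show ?thesis by simp
  qed
qed

lemma g_C: "m \<ge> 6 \<Longrightarrow> g m \<le> 3 * g (m - 5)"
proof (cases "m < 16")
  case True
  assume "m \<ge> 6"
  then show ?thesis using lt16[OF True] by (elim disjE) (simp_all add: g_small)
next
  case False
  then show ?thesis using g_shift[of m 0] by simp
qed


locale FF =
  fixes V0 :: "'a set" and E :: "'a \<Rightarrow> 'a \<Rightarrow> bool"
  assumes forest: "forest V0 E"
begin

lemma fin0: "finite V0" and symE: "E x y \<Longrightarrow> E y x" and irr: "\<not> E x x"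
  and inV: "E x y \<Longrightarrow> x \<in> V0 \<and> y \<in> V0" and nocyc: "\<not> is_cycle V0 E cs"
  using forest unfolding forest_def simple_graph_def by blast+

abbreviation nb :: "'a set \<Rightarrow> 'a \<Rightarrow> 'a set" where "nb V v \<equiv> open_nbhd V E v"

lemma nb_def: "nb V v = {u \<in> V. E v u}" by (simp add: open_nbhd_def)

definition mis :: "'a set \<Rightarrow> 'a set \<Rightarrow> bool" where
  "mis V S \<longleftrightarrow> S \<subseteq> V \<and> (\<forall>x\<in>S. \<forall>y\<in>S. \<not> E x y) \<and> (\<forall>w\<in>V - S. \<exists>s\<in>S. E w s)"

lemma mis_iff: "maximal_independent V E S \<longleftrightarrow> mis V S"
proof
  assume a: "maximal_independent V E S"
  then have ind: "S \<subseteq> V" "\<forall>x\<in>S. \<forall>y\<in>S. \<not> E x y"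
    unfolding maximal_independent_def independent_def by auto
  have "\<exists>s\<in>S. E w s" if w: "w \<in> V - S" for w
  proof (rule ccontr)
    assume "\<not> (\<exists>s\<in>S. E w s)"
    then have "independent V E (insert w S)" using ind w irr symE
      unfolding independent_def by blast
    then have "insert w S = S" using a unfolding maximal_independent_def by blast
    then show False using w by blast
  qed
  then show "mis V S" using ind unfolding mis_def by blast
next
  assume m: "mis V S"
  show "maximal_independent V E S"
    unfolding maximal_independent_def independent_def
  proof (intro conjI allI impI)
    show "S \<subseteq> V" "\<forall>x\<in>S. \<forall>y\<in>S. \<not> E x y" using m unfolding mis_def by auto
  next
    fix T assume T: "T \<subseteq> V \<and> (\<forall>x\<in>T. \<forall>y\<in>T. \<not> E x y)" and ST: "S \<subseteq> T"
    show "T = S"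
    proof (rule ccontr)
      assume "T \<noteq> S"
      then obtain t where "t \<in> T" "t \<notin> S" using ST by blast
      then obtain s where "s \<in> S" "E t s" using m T unfolding mis_def by blast
      then show False using T ST \<open>t \<in> T\<close> by blast
    qed
  qed
qed

lemma imax_eq: "i_max V E = card {S. mis V S}"
  unfolding i_max_def mis_iff by simp

lemma fin_mis: "finite V \<Longrightarrow> finite {S. mis V S}"
  by (rule finite_subset[of _ "Pow V"]) (auto simp: mis_def)

lemma iso_lemma:
  assumes fin: "finite V" and z: "z \<in> V" and nz: "nb V z = {}"
  shows "i_max V E = i_max (V - {z}) E"
proof -
  have zin: "z \<in> S" if S: "mis V S" for S
  proof (rule ccontr)
    assume "z \<notin> S"
    then obtain s where "s \<in> S" "E z s" using S z unfolding mis_def by blast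
    moreover have "s \<in> V" using S \<open>s \<in> S\<close> unfolding mis_def by blast
    ultimately show False using nz unfolding nb_def by blast
  qed
  have eq: "{S. mis V S} = insert z ` {T. mis (V - {z}) T}"
  proof (rule set_eqI, rule iffI)
    fix S assume S: "S \<in> {S. mis V S}"
    then have S': "mis V S" by simp
    have "\<exists>s\<in>S - {z}. E w s" if w: "w \<in> (V - {z}) - (S - {z})" for w
    proof -
      obtain s where "s \<in> S" "E w s" using S' w unfolding mis_def by blast
      moreover have "s \<noteq> z" using \<open>E w s\<close> w nz symE unfolding nb_def by blast
      ultimately show ?thesis by blast
    qed
    then have "mis (V - {z}) (S - {z})" using S' unfolding mis_def by auto
    moreover have "S = insert z (S - {z})" using zin S by auto
    ultimately show "S \<in> insert z ` {T. mis (V - {z}) T}" by blast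
  next
    fix S assume "S \<in> insert z ` {T. mis (V - {z}) T}"
    then obtain T where T: "mis (V - {z}) T" and S: "S = insert z T" by blast
    have "\<not> E z t" if "t \<in> T" for t using nz that T unfolding nb_def mis_def by auto
    then show "S \<in> {S. mis V S}" using T z irr symE unfolding S mis_def by auto
  qed
  have inj: "inj_on (insert z) {T. mis (V - {z}) T}"
    by (rule inj_onI) (auto simp: mis_def)
  show ?thesis unfolding imax_eq eq using card_image[OF inj] by simp
qed

lemma leaf_lemma:
  assumes fin: "finite V" and u: "u \<in> V" and nu: "nb V u = {v}"
  shows "i_max V E = i_max (V - {u, v}) E + i_max (V - insert u (insert v (nb V v))) E"
proof -
  have v: "v \<in> V" "E u v" using nu unfolding nb_def by auto
  have uv: "u \<noteq> v" using v irr by auto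
  have nbu: "E u x \<longleftrightarrow> x = v" if "x \<in> V" for x using nu that unfolding nb_def by auto
  define A where "A = V - {u, v}"
  define B where "B = V - insert u (insert v (nb V v))"
  have eq: "{S. mis V S} = insert u ` {T. mis A T} \<union> insert v ` {T. mis B T}"
  proof (rule set_eqI, rule iffI)
    fix S assume "S \<in> {S. mis V S}"
    then have S: "mis V S" by simp
    have "u \<in> S \<or> v \<in> S"
    proof (rule ccontr)
      assume "\<not> (u \<in> S \<or> v \<in> S)"
      then have "u \<in> V - S" using u by blast
      then obtain s where "s \<in> S" "E u s" using S unfolding mis_def by blast
      then show False using nbu S \<open>\<not> (u \<in> S \<or> v \<in> S)\<close> unfolding mis_def by auto
    qed
    then show "S \<in> insert u ` {T. mis A T} \<union> insert v ` {T. mis B T}"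
    proof
      assume uS: "u \<in> S"
      have "v \<notin> S" using uS S v unfolding mis_def by auto
      have dom: "\<exists>s\<in>S - {u}. E w s" if w: "w \<in> A - (S - {u})" for w
      proof -
        have "w \<in> V - S" "w \<noteq> v" "w \<noteq> u" using w uS unfolding A_def by auto
        then obtain s where "s \<in> S" "E w s" using S unfolding mis_def by blast
        moreover have "s \<noteq> u" using \<open>E w s\<close> \<open>w \<noteq> v\<close> nbu[of w] \<open>w \<in> V - S\<close> symE by blast
        ultimately show ?thesis by blast
      qed
      have "mis A (S - {u})" using S uS \<open>v \<notin> S\<close> dom unfolding mis_def A_def by auto
      then show ?thesis using uS by (metis (mono_tags) UnI1 image_eqI insert_Diff mem_Collect_eq)
    next
      assume vS: "v \<in> S"
      have uS: "u \<notin> S" using vS S v unfolding mis_def by auto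
      have sub: "S - {v} \<subseteq> B"
      proof
        fix s assume s: "s \<in> S - {v}"
        then have "\<not> E v s" using S vS unfolding mis_def by auto
        then show "s \<in> B" using s uS S unfolding B_def nb_def mis_def by auto
      qed
      have dom: "\<exists>s\<in>S - {v}. E w s" if w: "w \<in> B - (S - {v})" for w
      proof -
        have "w \<in> V - S" "\<not> E w v" using w symE unfolding B_def nb_def by auto
        then obtain s where "s \<in> S" "E w s" using S unfolding mis_def by blast
        moreover have "s \<noteq> v" using \<open>E w s\<close> \<open>\<not> E w v\<close> by blast
        ultimately show ?thesis by blast
      qed
      have "mis B (S - {v})" using S sub dom unfolding mis_def by auto
      then show ?thesis using vS by (metis (mono_tags) UnI2 image_eqI insert_Diff mem_Collect_eq)
    qed
  next
    fix S assume "S \<in> insert u ` {T. mis A T} \<union> insert v ` {T. mis B T}"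
    then show "S \<in> {S. mis V S}"
    proof
      assume "S \<in> insert u ` {T. mis A T}"
      then obtain T where T: "mis A T" and S: "S = insert u T" by blast
      have nE: "\<not> E u t \<and> \<not> E t u" if "t \<in> T" for t using that T nbu symE unfolding mis_def A_def by blast
      have TV: "T \<subseteq> V" using T unfolding mis_def A_def by auto
      have dom: "\<exists>s\<in>insert u T. E w s" if "w \<in> V" "w \<notin> insert u T" for w
      proof (cases "w = v")
        case True then show ?thesis using v symE by blast
      next
        case False
        then have "w \<in> A - T" using that unfolding A_def by auto
        then show ?thesis using T unfolding mis_def by blast
      qed
      show ?thesis using T u TV nE irr dom unfolding S mis_def by auto
    next
      assume "S \<in> insert v ` {T. mis B T}"
      then obtain T where T: "mis B T" and S: "S = insert v T" by blast
      have "\<not> E v t \<and> \<not> E t v" if "t \<in> T" for t using that T symE unfolding mis_def B_def nb_def by blast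
      moreover have "T \<subseteq> V" using T unfolding mis_def B_def by auto
      moreover have "\<exists>s\<in>insert v T. E w s" if "w \<in> V" "w \<notin> insert v T" for w
      proof (cases "E v w")
        case True then show ?thesis using symE by blast
      next
        case False
        have "E v u" using v symE by blast
        then have "w \<noteq> u" using False by blast
        then have "w \<in> B - T" using that False unfolding B_def nb_def by auto
        then show ?thesis using T unfolding mis_def by blast
      qed
      ultimately show ?thesis using T v irr unfolding S mis_def by auto
    qed
  qed
  have fA: "finite {T. mis A T}" "finite {T. mis B T}" using fin by (auto simp: A_def B_def intro!: fin_mis)
  have injA: "inj_on (insert u) {T. mis A T}"
    by (rule inj_onI) (auto simp: mis_def A_def)
  have injB: "inj_on (insert v) {T. mis B T}"
    by (rule inj_onI) (auto simp: mis_def B_def)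
  have disj: "insert u ` {T. mis A T} \<inter> insert v ` {T. mis B T} = {}"
    using uv by (auto simp: mis_def A_def)
  have "card {S. mis V S} = card (insert u ` {T. mis A T}) + card (insert v ` {T. mis B T})"
    unfolding eq by (rule card_Un_disjoint) (use fA disj in auto)
  also have "\<dots> = card {T. mis A T} + card {T. mis B T}"
    using card_image[OF injA] card_image[OF injB] by simp
  finally show ?thesis unfolding imax_eq A_def B_def .
qed


lemma twin_imax:
  assumes fin: "finite V" and u: "u \<in> V" and v: "v \<in> V" and uv: "u \<noteq> v" and tw: "nb V u = nb V v"
  shows "i_max V E = i_max (V - {v}) E"
proof -
  have tw': "E u x \<longleftrightarrow> E v x" if "x \<in> V" for x using tw that unfolding nb_def by blast
  have equiv: "u \<in> S \<longleftrightarrow> v \<in> S" if S: "mis V S" for S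
  proof
    assume uS: "u \<in> S" show "v \<in> S"
    proof (rule ccontr)
      assume "v \<notin> S"
      then have "v \<in> V - S" using v by blast
      then obtain s where "s \<in> S" "E v s" using S unfolding mis_def by blast
      moreover have "s \<in> V" using S \<open>s \<in> S\<close> unfolding mis_def by blast
      ultimately have "E u s" using tw' by blast
      then show False using uS \<open>s \<in> S\<close> S unfolding mis_def by blast
    qed
  next
    assume vS: "v \<in> S" show "u \<in> S"
    proof (rule ccontr)
      assume "u \<notin> S"
      then have "u \<in> V - S" using u by blast
      then obtain s where "s \<in> S" "E u s" using S unfolding mis_def by blast
      moreover have "s \<in> V" using S \<open>s \<in> S\<close> unfolding mis_def by blast
      ultimately have "E v s" using tw' by blast
      then show False using vS \<open>s \<in> S\<close> S unfolding mis_def by blast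
    qed
  qed
  define h where "h T = (if u \<in> T then insert v T else T)" for T
  have eq: "{S. mis V S} = h ` {T. mis (V - {v}) T}"
  proof (rule set_eqI, rule iffI)
    fix S assume "S \<in> {S. mis V S}"
    then have S: "mis V S" by simp
    have dom: "\<exists>s\<in>S - {v}. E w s" if w: "w \<in> (V - {v}) - (S - {v})" for w
    proof -
      obtain s where s: "s \<in> S" "E w s" using S w unfolding mis_def by blast
      show ?thesis
      proof (cases "s = v")
        case False then show ?thesis using s by blast
      next
        case True
        then have "u \<in> S" using equiv[OF S] s by simp
        have "E v w" using s True symE by blast
        then have "E u w" using tw' w by blast
        then have "E w u" by (rule symE)
        moreover have "u \<in> S - {v}" using \<open>u \<in> S\<close> uv by blast
        ultimately show ?thesis by blast
      qed
    qed
    have "mis (V - {v}) (S - {v})" using S dom unfolding mis_def by auto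
    moreover have "S = h (S - {v})" using equiv[OF S] uv unfolding h_def by auto
    ultimately show "S \<in> h ` {T. mis (V - {v}) T}" by blast
  next
    fix S assume "S \<in> h ` {T. mis (V - {v}) T}"
    then obtain T where T: "mis (V - {v}) T" and S: "S = h T" by blast
    have TV: "T \<subseteq> V" "v \<notin> T" using T unfolding mis_def by auto
    show "S \<in> {S. mis V S}"
    proof (cases "u \<in> T")
      case True
      have nE1: "\<not> E v t" if t: "t \<in> T" for t
      proof
        assume "E v t"
        then have "E u t" using tw' TV t by blast
        then show False using T True t unfolding mis_def by blast
      qed
      have nE: "\<not> E v t \<and> \<not> E t v" if "t \<in> T" for t
        using nE1[OF that] nE1[OF that] symE[of t v] by blast
      have "mis V (insert v T)" using T v TV nE irr unfolding mis_def by auto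
      then show ?thesis using True unfolding S h_def by simp
    next
      case False
      have "\<exists>s\<in>T. E v s"
      proof -
        obtain s where "s \<in> T" "E u s" using T u uv False unfolding mis_def by blast
        then show ?thesis using tw' TV by blast
      qed
      then have "mis V T" using T TV unfolding mis_def by auto
      then show ?thesis using False unfolding S h_def by simp
    qed
  qed
  have inj: "inj_on h {T. mis (V - {v}) T}"
  proof (rule inj_onI)
    fix T1 T2 assume "T1 \<in> {T. mis (V - {v}) T}" "T2 \<in> {T. mis (V - {v}) T}" "h T1 = h T2"
    then have "v \<notin> T1" "v \<notin> T2" "h T1 - {v} = h T2 - {v}" unfolding mis_def by auto
    moreover have "h T - {v} = T" if "v \<notin> T" for T using that unfolding h_def by auto
    ultimately show "T1 = T2" by (metis (no_types))
  qed
  show ?thesis unfolding imax_eq eq using card_image[OF inj] by simp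
qed

definition rr :: "'a set \<Rightarrow> nat" where "rr V = card (nb V ` V)"
definition io :: "'a set \<Rightarrow> nat" where "io V = (if \<exists>x\<in>V. nb V x = {} then 1 else 0)"

lemma nb_del: "nb (V - X) x = nb V x - X" unfolding nb_def by auto

lemma twin_rr:
  assumes fin: "finite V" and u: "u \<in> V" and v: "v \<in> V" and uv: "u \<noteq> v" and tw: "nb V u = nb V v"
  shows "rr (V - {v}) = rr V" "io (V - {v}) = io V"
proof -
  have key: "v \<in> nb V x \<longleftrightarrow> u \<in> nb V x" if x: "x \<in> V" for x
  proof -
    have "v \<in> nb V x \<longleftrightarrow> E x v" using v unfolding nb_def by simp
    also have "\<dots> \<longleftrightarrow> E v x" using symE by blast
    also have "\<dots> \<longleftrightarrow> x \<in> nb V v" using x unfolding nb_def by simp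
    also have "\<dots> \<longleftrightarrow> x \<in> nb V u" using tw by simp
    also have "\<dots> \<longleftrightarrow> E u x" using x unfolding nb_def by simp
    also have "\<dots> \<longleftrightarrow> E x u" using symE by blast
    also have "\<dots> \<longleftrightarrow> u \<in> nb V x" using u unfolding nb_def by simp
    finally show ?thesis .
  qed
  have im1: "nb V ` V = nb V ` (V - {v})"
  proof
    show "nb V ` V \<subseteq> nb V ` (V - {v})"
    proof
      fix N assume "N \<in> nb V ` V"
      then obtain x where x: "x \<in> V" "N = nb V x" by blast
      show "N \<in> nb V ` (V - {v})"
      proof (cases "x = v")
        case True
        then have "N = nb V u" using x tw by simp
        moreover have "u \<in> V - {v}" using u uv by blast
        ultimately show ?thesis by blast
      next
        case False then show ?thesis using x by blast
      qed
    qed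
  qed auto
  have inj: "inj_on (\<lambda>N. N - {v}) (nb V ` V)"
  proof (rule inj_onI)
    fix N1 N2 assume "N1 \<in> nb V ` V" "N2 \<in> nb V ` V" and e: "N1 - {v} = N2 - {v}"
    then obtain x1 x2 where x: "x1 \<in> V" "x2 \<in> V" "N1 = nb V x1" "N2 = nb V x2" by blast
    have "v \<in> N1 \<longleftrightarrow> v \<in> N2" using key[OF x(1)] key[OF x(2)] x e uv by blast
    then show "N1 = N2" using e by blast
  qed
  have im2: "nb (V - {v}) ` (V - {v}) = (\<lambda>N. N - {v}) ` (nb V ` V)"
    unfolding im1 nb_del by auto
  show "rr (V - {v}) = rr V" unfolding rr_def im2 using card_image[OF inj] by simp
  have "(\<exists>x\<in>V - {v}. nb (V - {v}) x = {}) \<longleftrightarrow> (\<exists>x\<in>V. nb V x = {})"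
  proof
    assume "\<exists>x\<in>V - {v}. nb (V - {v}) x = {}"
    then obtain x where x: "x \<in> V" "x \<noteq> v" "nb V x - {v} = {}" unfolding nb_del by blast
    have "v \<notin> nb V x"
    proof
      assume "v \<in> nb V x" then have "u \<in> nb V x" using key x by blast
      then show False using x uv by blast
    qed
    then show "\<exists>x\<in>V. nb V x = {}" using x by blast
  next
    assume "\<exists>x\<in>V. nb V x = {}"
    then obtain x where x: "x \<in> V" "nb V x = {}" by blast
    show "\<exists>x\<in>V - {v}. nb (V - {v}) x = {}"
    proof (cases "x = v")
      case True then show ?thesis using x u uv tw unfolding nb_del by (intro bexI[of _ u]) auto
    next
      case False then show ?thesis using x unfolding nb_del by blast
    qed
  qed
  then show "io (V - {v}) = io V" unfolding io_def by simp
qed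

lemma W_lemma:
  assumes fin: "finite V" and W: "W \<subseteq> V" and inj: "inj_on (nb V) W" and ne: "\<forall>w\<in>W. nb V w \<noteq> {}"
  shows "card W \<le> rr V - io V"
proof -
  have c: "card W = card (nb V ` W)" using card_image[OF inj] by simp
  have sub: "nb V ` W \<subseteq> nb V ` V" using W by blast
  have fV: "finite (nb V ` V)" using fin by simp
  show ?thesis
  proof (cases "\<exists>x\<in>V. nb V x = {}")
    case True
    then have "{} \<in> nb V ` V" by force
    moreover have "{} \<notin> nb V ` W" using ne by force
    ultimately have "nb V ` W \<subset> nb V ` V" using sub by blast
    then have "card (nb V ` W) < card (nb V ` V)" by (rule psubset_card_mono[OF fV])
    moreover have "io V = 1" using True unfolding io_def by simp
    ultimately show ?thesis using c unfolding rr_def by simp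
  next
    case False
    then have "io V = 0" unfolding io_def by simp
    then show ?thesis using c card_mono[OF fV sub] unfolding rr_def by simp
  qed
qed

lemma iso_card_le:
  assumes fin: "finite V" and twf: "inj_on (nb V) V"
  shows "card {x\<in>V. nb V x = {}} \<le> io V"
proof (cases "\<exists>x\<in>V. nb V x = {}")
  case True
  have "card {x\<in>V. nb V x = {}} \<le> 1"
    using twf card_le_Suc0_iff_eq[of "{x\<in>V. nb V x = {}}"] fin unfolding inj_on_def by auto
  moreover have "io V = 1" using True unfolding io_def by simp
  ultimately show ?thesis by simp
next
  case False
  then have e: "{x\<in>V. nb V x = {}} = {}" by auto
  show ?thesis unfolding e by simp
qed

lemma noniso_card:
  assumes fin: "finite V" and S: "S \<subseteq> V" and ne: "\<forall>x\<in>S. nb V x \<noteq> {}"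
  shows "card S \<le> card V - io V"
proof (cases "\<exists>x\<in>V. nb V x = {}")
  case True
  then obtain x where "x \<in> V" "nb V x = {}" by blast
  then have "S \<subseteq> V - {x}" using S ne by blast
  then have "card S \<le> card (V - {x})" using fin by (intro card_mono) auto
  moreover have "io V = 1" using True unfolding io_def by simp
  moreover have "card (V - {x}) = card V - 1" using \<open>x \<in> V\<close> fin by simp
  ultimately show ?thesis by simp
next
  case False
  then have "io V = 0" unfolding io_def by simp
  then show ?thesis using card_mono[OF fin S] by simp
qed

lemma del_lemma:
  assumes fin: "finite V" and twf: "inj_on (nb V) V" and X: "X \<subseteq> V" and Bad: "Bad \<subseteq> V"
   and good: "\<And>c. c \<in> V - X - Bad \<Longrightarrow> nb V c \<inter> X \<noteq> {} \<Longrightarrow>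
        nb (V - X) c \<noteq> {} \<and> (\<forall>z \<in> V - X. z \<noteq> c \<longrightarrow> nb (V - X) z \<noteq> nb (V - X) c)"
  shows "card V - io V - card X - card Bad \<le> rr (V - X) - io (V - X)"
proof -
  define Iso where "Iso = {x\<in>V. nb V x = {}}"
  define W where "W = V - X - Bad - Iso"
  have ci: "card Iso \<le> io V" unfolding Iso_def by (rule iso_card_le[OF fin twf])
  have fX: "finite X" "finite Bad" "finite Iso" using fin X Bad finite_subset unfolding Iso_def by auto
  have "card V - card X \<le> card (V - X)" by (rule diff_card_le_card_Diff[OF fX(1)])
  moreover have "card (V - X) - card Bad \<le> card (V - X - Bad)" by (rule diff_card_le_card_Diff[OF fX(2)])
  moreover have "card (V - X - Bad) - card Iso \<le> card W" unfolding W_def by (rule diff_card_le_card_Diff[OF fX(3)])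
  ultimately have cW: "card V - io V - card X - card Bad \<le> card W" using ci by linarith
  have unch: "nb (V - X) c = nb V c" if "nb V c \<inter> X = {}" for c using that unfolding nb_del by blast
  have inj: "inj_on (nb (V - X)) W"
  proof (rule inj_onI)
    fix x y assume x: "x \<in> W" and y: "y \<in> W" and e: "nb (V - X) x = nb (V - X) y"
    show "x = y"
    proof (rule ccontr)
      assume xy: "x \<noteq> y"
      have xW: "x \<in> V - X - Bad" "y \<in> V - X - Bad" using x y unfolding W_def by auto
      show False
      proof (cases "nb V x \<inter> X = {}")
        case False
        have "\<forall>z\<in>V - X. z \<noteq> x \<longrightarrow> nb (V - X) z \<noteq> nb (V - X) x" using good[OF xW(1) False] by blast
        moreover have "y \<in> V - X" "y \<noteq> x" using xW(2) xy by auto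
        ultimately have "nb (V - X) y \<noteq> nb (V - X) x" by blast
        then show False using e by simp
      next
        case True
        show False
        proof (cases "nb V y \<inter> X = {}")
          case False
          have "\<forall>z\<in>V - X. z \<noteq> y \<longrightarrow> nb (V - X) z \<noteq> nb (V - X) y" using good[OF xW(2) False] by blast
          moreover have "x \<in> V - X" "x \<noteq> y" using xW(1) xy by auto
          ultimately have "nb (V - X) x \<noteq> nb (V - X) y" by blast
          then show False using e by simp
        next
          case True2: True
          then have "nb V x = nb V y" using unch[OF True] unch[OF True2] e by simp
          moreover have "x \<in> V" "y \<in> V" using x y unfolding W_def by auto
          ultimately have "x = y" using inj_onD[OF twf] by blast
          then show False using xy by simp
        qed
      qed
    qed
  qed
  have ne: "\<forall>w\<in>W. nb (V - X) w \<noteq> {}"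
  proof
    fix w assume w: "w \<in> W"
    show "nb (V - X) w \<noteq> {}"
    proof (cases "nb V w \<inter> X = {}")
      case True then show ?thesis using unch[OF True] w unfolding W_def Iso_def by auto
    next
      case False
      have "w \<in> V - X - Bad" using w unfolding W_def by auto
      then show ?thesis using good[OF _ False] by blast
    qed
  qed
  have "card W \<le> rr (V - X) - io (V - X)"
  proof (rule W_lemma)
    show "finite (V - X)" using fin by simp
    show "W \<subseteq> V - X" unfolding W_def by blast
  qed (use inj ne in auto)
  then show ?thesis using cW by linarith
qed


lemma io_1: "\<exists>x\<in>V. nb V x = {} \<Longrightarrow> io V = 1" unfolding io_def by simp
lemma io_0: "\<not> (\<exists>x\<in>V. nb V x = {}) \<Longrightarrow> io V = 0" unfolding io_def by simp
lemma io_le1: "io V \<le> 1" unfolding io_def by simp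

fun adjl :: "'a list \<Rightarrow> bool" where
  "adjl (x # y # zs) = (E x y \<and> adjl (y # zs))"
| "adjl _ = True"

lemma adjl_Cons: "adjl (x # xs) \<longleftrightarrow> (xs = [] \<or> (E x (hd xs) \<and> adjl xs))"
  by (cases xs) auto

lemma adjl_append: "adjl (xs @ ys) \<longleftrightarrow> adjl xs \<and> adjl ys \<and> (xs \<noteq> [] \<longrightarrow> ys \<noteq> [] \<longrightarrow> E (last xs) (hd ys))"
proof (induction xs)
  case Nil then show ?case by simp
next
  case (Cons x xs)
  show ?case
  proof (cases xs)
    case Nil then show ?thesis by (cases ys) auto
  next
    case (Cons y zs) then show ?thesis using Cons.IH by auto
  qed
qed

lemma adjl_nth: "adjl xs \<longleftrightarrow> (\<forall>i. Suc i < length xs \<longrightarrow> E (xs!i) (xs!Suc i))"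
proof (induction xs rule: adjl.induct)
  case (1 x y zs)
  have "(\<forall>i. Suc i < length (x # y # zs) \<longrightarrow> E ((x # y # zs) ! i) ((x # y # zs) ! Suc i)) \<longleftrightarrow>
        E x y \<and> (\<forall>i. Suc i < length (y # zs) \<longrightarrow> E ((y # zs) ! i) ((y # zs) ! Suc i))"
  proof
    assume a: "\<forall>i. Suc i < length (x # y # zs) \<longrightarrow> E ((x # y # zs) ! i) ((x # y # zs) ! Suc i)"
    have "E x y" using a[rule_format, of 0] by simp
    moreover have "\<forall>i. Suc i < length (y # zs) \<longrightarrow> E ((y # zs) ! i) ((y # zs) ! Suc i)"
    proof (intro allI impI)
      fix i assume "Suc i < length (y # zs)"
      then show "E ((y # zs) ! i) ((y # zs) ! Suc i)" using a[rule_format, of "Suc i"] by simp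
    qed
    ultimately show "E x y \<and> (\<forall>i. Suc i < length (y # zs) \<longrightarrow> E ((y # zs) ! i) ((y # zs) ! Suc i))" by blast
  next
    assume a: "E x y \<and> (\<forall>i. Suc i < length (y # zs) \<longrightarrow> E ((y # zs) ! i) ((y # zs) ! Suc i))"
    show "\<forall>i. Suc i < length (x # y # zs) \<longrightarrow> E ((x # y # zs) ! i) ((x # y # zs) ! Suc i)"
    proof (intro allI impI)
      fix i assume i: "Suc i < length (x # y # zs)"
      show "E ((x # y # zs) ! i) ((x # y # zs) ! Suc i)"
      proof (cases i)
        case 0 then show ?thesis using a by simp
      next
        case (Suc j) then show ?thesis using a i by simp
      qed
    qed
  qed
  then show ?case using 1 by simp
qed auto

lemma adjl_take: "adjl xs \<Longrightarrow> adjl (take n xs)"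
  by (simp add: adjl_nth)

lemma adjl_drop: "adjl xs \<Longrightarrow> adjl (drop n xs)"
  unfolding adjl_nth by (auto simp: add.commute[of n])

definition path :: "'a set \<Rightarrow> 'a list \<Rightarrow> bool" where
  "path V xs \<longleftrightarrow> distinct xs \<and> set xs \<subseteq> V \<and> adjl xs"

lemma cyc_list:
  assumes "V \<subseteq> V0" "distinct cs" "set cs \<subseteq> V" "adjl cs" "3 \<le> length cs" "E (last cs) (hd cs)"
  shows False
proof -
  have "is_cycle V0 E cs" using assms unfolding is_cycle_def adjl_nth by auto
  then show False using nocyc by blast
qed

definition seg :: "nat \<Rightarrow> nat \<Rightarrow> 'a list \<Rightarrow> 'a list" where
  "seg i j xs = take (Suc j - i) (drop i xs)"

lemma seg_props:
  assumes "path V xs" "i \<le> j" "j < length xs"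
  shows "length (seg i j xs) = Suc j - i" "seg i j xs \<noteq> []" "hd (seg i j xs) = xs ! i"
    "last (seg i j xs) = xs ! j" "set (seg i j xs) \<subseteq> set xs" "distinct (seg i j xs)" "adjl (seg i j xs)"
proof -
  show l: "length (seg i j xs) = Suc j - i" using assms unfolding seg_def by simp
  then show ne: "seg i j xs \<noteq> []" using assms by auto
  show "hd (seg i j xs) = xs ! i" using assms unfolding seg_def by (simp add: hd_drop_conv_nth)
  show "last (seg i j xs) = xs ! j" using assms ne l unfolding seg_def
    by (simp add: last_conv_nth)
  show "set (seg i j xs) \<subseteq> set xs" unfolding seg_def by (meson set_drop_subset set_take_subset subset_trans)
  show "distinct (seg i j xs)" using assms unfolding seg_def path_def by simp
  show "adjl (seg i j xs)" using assms unfolding seg_def path_def by (simp add: adjl_take adjl_drop)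
qed

lemma cyc_in_path:
  assumes p: "path V xs" and V: "V \<subseteq> V0" and ij: "i + 2 \<le> j" "j < length xs" and e: "E (xs!i) (xs!j)"
  shows False
proof -
  note s = seg_props[OF p _ ij(2), of i]
  show False
  proof (rule cyc_list[OF V, of "seg i j xs"])
    show "distinct (seg i j xs)" "adjl (seg i j xs)" using s ij by auto
    show "set (seg i j xs) \<subseteq> V" using s ij p unfolding path_def by auto
    show "3 \<le> length (seg i j xs)" using s ij by auto
    show "E (last (seg i j xs)) (hd (seg i j xs))" using s ij e symE by auto
  qed
qed

lemma cyc_ab:
  assumes V: "V \<subseteq> V0" and a: "a \<in> V" "a \<notin> set s" and b: "b \<in> V" "b \<notin> set s" and ab: "a \<noteq> b"
    and s: "s \<noteq> []" "distinct s" "set s \<subseteq> V" "adjl s"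
    and e: "E a b" "E b (hd s)" "E (last s) a"
  shows False
proof (rule cyc_list[OF V, of "a # b # s"])
  show "distinct (a # b # s)" using a b ab s by auto
  show "set (a # b # s) \<subseteq> V" using a b s by auto
  show "adjl (a # b # s)" using s e by (cases s) auto
  show "3 \<le> length (a # b # s)" using s by (cases s) auto
  show "E (last (a # b # s)) (hd (a # b # s))" using s e by simp
qed

lemma cyc_out1:
  assumes p: "path V xs" and V: "V \<subseteq> V0" and u: "u \<in> V" "u \<notin> set xs" and ij: "i < j" "j < length xs"
    and e: "E u (xs!i)" "E u (xs!j)"
  shows False
proof -
  note s = seg_props[OF p _ ij(2), of i]
  have "i \<le> j" using ij by simp
  show False
  proof (rule cyc_list[OF V, of "u # seg i j xs"])
    show "distinct (u # seg i j xs)" using s \<open>i \<le> j\<close> u by auto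
    show "set (u # seg i j xs) \<subseteq> V" using s \<open>i \<le> j\<close> p u unfolding path_def by auto
    show "adjl (u # seg i j xs)" using s \<open>i \<le> j\<close> e unfolding adjl_Cons by auto
    show "3 \<le> length (u # seg i j xs)" using s ij by auto
    show "E (last (u # seg i j xs)) (hd (u # seg i j xs))" using s \<open>i \<le> j\<close> e symE by auto
  qed
qed

lemma cyc_out2:
  assumes p: "path V xs" and V: "V \<subseteq> V0" and u: "u \<in> V" "u \<notin> set xs" and z: "z \<in> V" "z \<notin> set xs"
    and uz: "u \<noteq> z" and e: "E u z" "E u (xs!i)" "E z (xs!j)" and ij: "i < length xs" "j < length xs"
  shows False
proof -
  have pv: "set xs \<subseteq> V" using p unfolding path_def by simp
  have e': "E z u" "E (xs!j) z" "E (xs!i) u" using e symE by blast+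
  consider "i < j" | "j < i" | "i = j" by linarith
  then show False
  proof cases
    case 1
    note s = seg_props[OF p _ ij(2), of i]
    show False
      by (rule cyc_ab[OF V z(1) _ u(1) _ uz[symmetric], of "seg i j xs"])
        (use s 1 z u pv e e' in auto)
  next
    case 2
    note s = seg_props[OF p _ ij(1), of j]
    show False
      by (rule cyc_ab[OF V u(1) _ z(1) _ uz, of "seg j i xs"])
        (use s 2 z u pv e e' in auto)
  next
    case 3
    show False
      by (rule cyc_ab[OF V u(1) _ z(1) _ uz, of "[xs!i]"])
        (use 3 z u pv e e' ij in auto)
  qed
qed

lemma longest:
  assumes fin: "finite V" and p0: "path V xs0"
  obtains xs where "path V xs" "\<And>ys. path V ys \<Longrightarrow> length ys \<le> length xs"
proof -
  have bd: "\<forall>y. path V y \<longrightarrow> length y < Suc (card V)"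
  proof (intro allI impI)
    fix y assume "path V y"
    then have "length y = card (set y)" "set y \<subseteq> V" unfolding path_def by (auto simp: distinct_card)
    moreover have "card (set y) \<le> card V" using card_mono[OF fin] \<open>set y \<subseteq> V\<close> by blast
    ultimately show "length y < Suc (card V)" by simp
  qed
  obtain xs where xs: "path V xs" "\<forall>y. path V y \<longrightarrow> length y \<le> length xs"
    using ex_has_greatest_nat[OF p0 bd] by blast
  show ?thesis by (rule that[OF xs(1)]) (use xs(2) in blast)
qed


definition goodp :: "'a set \<Rightarrow> 'a \<Rightarrow> bool" where
  "goodp H c \<longleftrightarrow> nb H c \<noteq> {} \<and> (\<forall>z\<in>H. z \<noteq> c \<longrightarrow> nb H z \<noteq> nb H c)"

lemma del_bound:
  assumes V: "V \<subseteq> V0" and twf: "inj_on (nb V) V"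
    and IH: "\<And>V'. V' \<subset> V \<Longrightarrow> g (rr V' - io V') \<le> i_max V' E"
    and X: "X \<subseteq> V" "X \<noteq> {}" and Bad: "Bad \<subseteq> V"
    and good: "\<And>c. c \<in> V - X - Bad \<Longrightarrow> nb V c \<inter> X \<noteq> {} \<Longrightarrow> goodp (V - X) c"
  shows "g (card V - io V - card X - card Bad) \<le> i_max (V - X) E"
proof -
  have fin: "finite V" using V fin0 finite_subset by blast
  have "card V - io V - card X - card Bad \<le> rr (V - X) - io (V - X)"
    by (rule del_lemma[OF fin twf X(1) Bad]) (use good in \<open>auto simp: goodp_def\<close>)
  then have "g (card V - io V - card X - card Bad) \<le> g (rr (V - X) - io (V - X))" by (rule g_mono)
  also have "\<dots> \<le> i_max (V - X) E" using IH X by blast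
  finally show ?thesis .
qed

lemma good_deg2:
  assumes H: "H \<subseteq> V0" and c: "c \<in> H" and p: "p \<in> nb H c" and q: "q \<in> nb H c" and pq: "p \<noteq> q"
  shows "goodp H c"
  unfolding goodp_def
proof (intro conjI ballI impI)
  show "nb H c \<noteq> {}" using p by blast
next
  fix z assume z: "z \<in> H" "z \<noteq> c"
  show "nb H z \<noteq> nb H c"
  proof
    assume e: "nb H z = nb H c"
    have ep: "E c p" "E c q" "p \<in> H" "q \<in> H" using p q unfolding nb_def by auto
    have ez: "E z p" "E z q" using p q e unfolding nb_def by auto
    have "E p z" "E q c" using ez ep symE by blast+
    show False
    proof (rule cyc_list[OF H, of "[c, p, z, q]"])
      show "distinct [c, p, z, q]" using z pq ep ez irr by auto
      show "set [c, p, z, q] \<subseteq> H" using z c ep by auto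
      show "adjl [c, p, z, q]" using ep ez \<open>E p z\<close> by simp
      show "3 \<le> length [c, p, z, q]" by simp
      show "E (last [c, p, z, q]) (hd [c, p, z, q])" using \<open>E q c\<close> by simp
    qed
  qed
qed

lemma good_leaf:
  assumes HV: "H \<subseteq> V" and c: "c \<in> H" and t: "nb H c = {t}" and tl: "nb V t \<subseteq> {c}"
  shows "goodp H c"
  unfolding goodp_def
proof (intro conjI ballI impI)
  show "nb H c \<noteq> {}" using t by blast
next
  fix z assume z: "z \<in> H" "z \<noteq> c"
  show "nb H z \<noteq> nb H c"
  proof
    assume e: "nb H z = nb H c"
    then have "E z t" using t unfolding nb_def by auto
    then have "E t z" by (rule symE)
    then have "z \<in> nb V t" using z HV unfolding nb_def by auto
    then show False using tl z by blast
  qed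
qed

lemma nb_hit: "c \<in> V \<Longrightarrow> nb V c \<inter> X \<noteq> {} \<Longrightarrow> X \<subseteq> V \<Longrightarrow> \<exists>x\<in>X. c \<in> nb V x"
proof -
  assume c: "c \<in> V" and h: "nb V c \<inter> X \<noteq> {}" and X: "X \<subseteq> V"
  then obtain x where x: "x \<in> X" "E c x" unfolding nb_def by blast
  have "E x c" using x(2) by (rule symE)
  then show ?thesis using x c unfolding nb_def by blast
qed

context
  fixes V xs
  assumes V: "V \<subseteq> V0" and twf: "inj_on (nb V) V"
    and p: "path V xs" and mx: "\<And>ys. path V ys \<Longrightarrow> length ys \<le> length xs"
    and l2: "2 \<le> length xs"
begin

lemma pset: "set xs \<subseteq> V" "distinct xs" "adjl xs" using p unfolding path_def by auto

lemma pin: "i < length xs \<Longrightarrow> xs ! i \<in> V" using pset by auto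

lemma pne: "xs \<noteq> []" using l2 by auto

lemma pin0: "xs ! 0 \<in> V" "xs ! 1 \<in> V" using pin[of 0] pin[of 1] pne l2 by auto

lemma padj: "Suc i < length xs \<Longrightarrow> E (xs!i) (xs!Suc i)" using pset(3) unfolding adjl_nth by blast

lemma lp_end: assumes u: "u \<in> V" "E (xs!0) u" shows "u = xs!1"
proof (cases "u \<in> set xs")
  case True
  then obtain j where j: "j < length xs" "xs!j = u" by (auto simp: in_set_conv_nth)
  consider "j = 0" | "j = 1" | "2 \<le> j" by linarith
  then show ?thesis
  proof cases
    case 1 then show ?thesis using j u irr by auto
  next
    case 2 then show ?thesis using j by simp
  next
    case 3
    show ?thesis using cyc_in_path[OF p V, of 0 j] 3 j u by simp
  qed
next
  case False
  have "path V (u # xs)"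
    unfolding path_def using False pset u l2
    by (auto simp: adjl_Cons hd_conv_nth intro: symE)
  then show ?thesis using mx by fastforce
qed

lemma lp_nb0: "nb V (xs!0) = {xs!1}"
proof -
  have "xs!1 \<in> nb V (xs!0)" using padj[of 0] pin[of 1] l2 unfolding nb_def by auto
  then show ?thesis using lp_end unfolding nb_def by blast
qed

lemma lp_endR: assumes u: "u \<in> V" "E (xs!(length xs - 1)) u" shows "u = xs!(length xs - 2)"
proof (cases "u \<in> set xs")
  case True
  then obtain j where j: "j < length xs" "xs!j = u" by (auto simp: in_set_conv_nth)
  consider "j = length xs - 1" | "j = length xs - 2" | "j + 3 \<le> length xs" using j(1) by linarith
  then show ?thesis
  proof cases
    case 1 then show ?thesis using j u irr by auto
  next
    case 2 then show ?thesis using j by simp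
  next
    case 3
    have "E (xs!j) (xs!(length xs - 1))" using u j symE by blast
    moreover have "j + 2 \<le> length xs - 1" "length xs - 1 < length xs" using 3 l2 by auto
    ultimately have False using cyc_in_path[OF p V] by blast
    then show ?thesis ..
  qed
next
  case False
  have lx: "last xs = xs!(length xs - 1)" using pne by (simp add: last_conv_nth)
  have "path V (xs @ [u])"
    unfolding path_def using False pset u l2 lx by (auto simp: adjl_append)
  then show ?thesis using mx by fastforce
qed

lemma lp_1: assumes l3: "3 \<le> length xs" and u: "u \<in> V" "E (xs!1) u" shows "u = xs!0 \<or> u = xs!2"
proof (cases "u \<in> set xs")
  case True
  then obtain j where j: "j < length xs" "xs!j = u" by (auto simp: in_set_conv_nth)
  consider "j \<le> 2" | "3 \<le> j" by linarith
  then show ?thesis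
  proof cases
    case 1
    then have "j = 0 \<or> j = 1 \<or> j = 2" by linarith
    then show ?thesis using j u irr by auto
  next
    case 2
    show ?thesis using cyc_in_path[OF p V, of 1 j] 2 j u by simp
  qed
next
  case False
  have x1: "xs!1 \<in> V" using pin l3 by simp
  have nbu: "nb V u = {xs!1}"
  proof
    show "{xs!1} \<subseteq> nb V u" using u x1 symE unfolding nb_def by blast
  next
    show "nb V u \<subseteq> {xs!1}"
    proof
      fix z assume z: "z \<in> nb V u"
      then have zV: "z \<in> V" and uz: "E u z" unfolding nb_def by auto
      show "z \<in> {xs!1}"
      proof (cases "z \<in> set xs")
        case True
        then obtain j where j: "j < length xs" "xs!j = z" by (auto simp: in_set_conv_nth)
        have e1: "E u (xs!1)" using u symE by blast
        consider "j < 1" | "j = 1" | "1 < j" by linarith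
        then show ?thesis
        proof cases
          case 1 then show ?thesis using cyc_out1[OF p V u(1) False, of j 1] e1 uz j l3 by simp
        next
          case 2 then show ?thesis using j by simp
        next
          case 3 then show ?thesis using cyc_out1[OF p V u(1) False, of 1 j] e1 uz j by simp
        qed
      next
        case zF: False
        have "path V (z # u # drop 1 xs)"
          unfolding path_def using zF False pset u zV uz l3 irr[of u]
          by (auto simp: adjl_Cons hd_drop_conv_nth adjl_drop intro: symE dest: in_set_dropD)
        then show ?thesis using mx l3 by fastforce
      qed
    qed
  qed
  then have "nb V u = nb V (xs!0)" using lp_nb0 by simp
  moreover have "xs!0 \<in> V" by (rule pin0)
  ultimately have "u = xs!0" using inj_onD[OF twf] u by blast
  then show ?thesis using False l3 by simp
qed


lemma lp_2: assumes l4: "4 \<le> length xs" and u: "u \<in> V" "E (xs!2) u" and u1: "u \<noteq> xs!1" and u3: "u \<noteq> xs!3"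
  shows "u \<notin> set xs" "\<And>z. z \<in> V \<Longrightarrow> E u z \<Longrightarrow> z \<noteq> xs!2 \<Longrightarrow> z \<notin> set xs \<and> nb V z = {u}"
proof -
  show uF: "u \<notin> set xs"
  proof
    assume "u \<in> set xs"
    then obtain j where j: "j < length xs" "xs!j = u" by (auto simp: in_set_conv_nth)
    consider "j = 0" | "j = 1" | "j = 2" | "j = 3" | "4 \<le> j" by linarith
    then show False
    proof cases
      case 1
      have "E (xs!0) (xs!2)" using u j 1 symE by blast
      then show False using cyc_in_path[OF p V, of 0 2] l4 by simp
    next
      case 2 then show False using j u1 by simp
    next
      case 3 then show False using j u irr by simp
    next
      case 4 then show False using j u3 by simp
    qed (use cyc_in_path[OF p V, of 2 j] j u in simp)
  qed
  have e2: "E u (xs!2)" using u symE by blast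
  fix z assume zV: "z \<in> V" and uz: "E u z" and z2: "z \<noteq> xs!2"
  have zF: "z \<notin> set xs"
  proof
    assume "z \<in> set xs"
    then obtain j where j: "j < length xs" "xs!j = z" by (auto simp: in_set_conv_nth)
    consider "j < 2" | "2 < j" using j z2 by fastforce
    then show False
    proof cases
      case 1 then show False using cyc_out1[OF p V u(1) uF, of j 2] e2 uz j l4 by simp
    next
      case 2 then show False using cyc_out1[OF p V u(1) uF, of 2 j] e2 uz j by simp
    qed
  qed
  have uz': "u \<noteq> z" using uz irr by blast
  have "nb V z = {u}"
  proof
    show "{u} \<subseteq> nb V z" using u uz symE unfolding nb_def by blast
  next
    show "nb V z \<subseteq> {u}"
    proof
      fix z' assume z': "z' \<in> nb V z"
      then have z'V: "z' \<in> V" and zz: "E z z'" unfolding nb_def by auto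
      show "z' \<in> {u}"
      proof (rule ccontr)
        assume nu: "z' \<notin> {u}"
        show False
        proof (cases "z' \<in> set xs")
          case True
          then obtain j where j: "j < length xs" "xs!j = z'" by (auto simp: in_set_conv_nth)
          show False using cyc_out2[OF p V u(1) uF zV zF uz' uz e2, of j] zz j l4 by simp
        next
          case False
          have "path V (z' # z # u # drop 2 xs)"
            unfolding path_def using False zF uF pset u zV z'V uz zz nu irr[of z]
            by (auto simp: adjl_Cons hd_drop_conv_nth adjl_drop l4 intro: symE dest: in_set_dropD)
          then show False using mx l4 by fastforce
        qed
      qed
    qed
  qed
  then show "z \<notin> set xs \<and> nb V z = {u}" using zF by blast
qed

lemma droot: assumes l4: "4 \<le> length xs" and u: "u \<in> V" "E (xs!2) u" and u1: "u \<noteq> xs!1" and u3: "u \<noteq> xs!3"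
  and nl: "nb V u \<noteq> {xs!2}"
  obtains w where "w \<in> V" "w \<notin> set xs" "w \<noteq> u" "nb V u = {xs!2, w}" "nb V w = {u}"
proof -
  have x2: "xs!2 \<in> nb V u" using u pin[of 2] l4 symE unfolding nb_def by auto
  then obtain w where w: "w \<in> nb V u" "w \<noteq> xs!2" using nl by blast
  then have wV: "w \<in> V" "E u w" unfolding nb_def by auto
  note W = lp_2(2)[OF l4 u u1 u3 wV w(2)]
  have "nb V u \<subseteq> {xs!2, w}"
  proof
    fix z assume z: "z \<in> nb V u"
    show "z \<in> {xs!2, w}"
    proof (cases "z = xs!2")
      case False
      have zV: "z \<in> V" "E u z" using z unfolding nb_def by auto
      have "nb V z = {u}" using lp_2(2)[OF l4 u u1 u3 zV False] by blast
      then have "z = w" using W inj_onD[OF twf] zV wV by simp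
      then show ?thesis by simp
    qed simp
  qed
  moreover have "w \<noteq> u" using wV irr by blast
  ultimately show ?thesis using that wV W x2 w by blast
qed

end


context
  fixes V xs
  assumes V: "V \<subseteq> V0" and twf: "inj_on (nb V) V"
    and IH: "\<And>V'. V' \<subset> V \<Longrightarrow> g (rr V' - io V') \<le> i_max V' E"
    and p: "path V xs" and mx: "\<And>ys. path V ys \<Longrightarrow> length ys \<le> length xs"
    and l4: "4 \<le> length xs"
begin

lemma l2': "2 \<le> length xs" using l4 by simp

lemma finV: "finite V" using V fin0 finite_subset by blast

lemma dxs: "distinct xs" and sxs: "set xs \<subseteq> V" and axs: "adjl xs" using p unfolding path_def by auto

lemma xlt: "0 < length xs" "1 < length xs" "2 < length xs" "3 < length xs" using l4 by linarith+

lemma xset: "xs!0 \<in> set xs" "xs!1 \<in> set xs" "xs!2 \<in> set xs" "xs!3 \<in> set xs"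
  using nth_mem xlt by blast+

lemma xin: "xs!0 \<in> V" "xs!1 \<in> V" "xs!2 \<in> V" "xs!3 \<in> V"
  using sxs xset by auto

lemma xdist: "xs!0 \<noteq> xs!1" "xs!0 \<noteq> xs!2" "xs!0 \<noteq> xs!3" "xs!1 \<noteq> xs!2" "xs!1 \<noteq> xs!3" "xs!2 \<noteq> xs!3"
proof -
  note D = nth_eq_iff_index_eq[OF dxs]
  show "xs!0 \<noteq> xs!1" using D[OF xlt(1) xlt(2)] by simp
  show "xs!0 \<noteq> xs!2" using D[OF xlt(1) xlt(3)] by simp
  show "xs!0 \<noteq> xs!3" using D[OF xlt(1) xlt(4)] by simp
  show "xs!1 \<noteq> xs!2" using D[OF xlt(2) xlt(3)] by simp
  show "xs!1 \<noteq> xs!3" using D[OF xlt(2) xlt(4)] by simp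
  show "xs!2 \<noteq> xs!3" using D[OF xlt(3) xlt(4)] by simp
qed

lemma xE: "E (xs!0) (xs!1)" "E (xs!1) (xs!2)" "E (xs!2) (xs!3)" "E (xs!1) (xs!0)" "E (xs!2) (xs!1)" "E (xs!3) (xs!2)"
proof -
  have A: "\<forall>i. Suc i < length xs \<longrightarrow> E (xs!i) (xs!Suc i)" using axs unfolding adjl_nth .
  show a: "E (xs!0) (xs!1)" "E (xs!1) (xs!2)" "E (xs!2) (xs!3)"
    using A[rule_format, of 0] A[rule_format, of 1] A[rule_format, of 2] l4 by (auto simp: eval_nat_numeral)
  show "E (xs!1) (xs!0)" "E (xs!2) (xs!1)" "E (xs!3) (xs!2)" using a symE by blast+
qed

lemma nb0: "nb V (xs!0) = {xs!1}" by (rule lp_nb0[OF V twf p mx l2'])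

lemma nb1: "nb V (xs!1) = {xs!0, xs!2}"
proof
  show "nb V (xs!1) \<subseteq> {xs!0, xs!2}"
    using lp_1[OF V twf p mx l2'] l4 unfolding nb_def by auto
  show "{xs!0, xs!2} \<subseteq> nb V (xs!1)" using xin xE unfolding nb_def by auto
qed

lemma mge: "card S \<le> card V - io V" if "S \<subseteq> V" "\<forall>x\<in>S. nb V x \<noteq> {}"
  by (rule noniso_card[OF finV that])

lemma xne: "nb V (xs!0) \<noteq> {}" "nb V (xs!1) \<noteq> {}" "nb V (xs!2) \<noteq> {}" "nb V (xs!3) \<noteq> {}"
  using xin xE unfolding nb_def by blast+

lemma eq1: "i_max V E = i_max (V - {xs!0, xs!1}) E + i_max (V - {xs!0, xs!1, xs!2}) E"
proof -
  have "i_max V E = i_max (V - {xs!0, xs!1}) E + i_max (V - insert (xs!0) (insert (xs!1) (nb V (xs!1)))) E"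
    by (rule leaf_lemma[OF finV xin(1) nb0])
  moreover have "insert (xs!0) (insert (xs!1) (nb V (xs!1))) = {xs!0, xs!1, xs!2}" using nb1 by auto
  ultimately show ?thesis by simp
qed


lemma card_leaves: "card {u\<in>V. nb V u = {a}} \<le> 1"
proof -
  have "finite {u\<in>V. nb V u = {a}}" using finV by simp
  moreover have "\<forall>x\<in>{u\<in>V. nb V u = {a}}. \<forall>y\<in>{u\<in>V. nb V u = {a}}. x = y"
    using inj_onD[OF twf] by auto
  ultimately have "card {u\<in>V. nb V u = {a}} \<le> Suc 0" using card_le_Suc0_iff_eq by blast
  then show ?thesis by simp
qed

lemma caseA:
  assumes w2: "w2 \<in> V" "E (xs!2) w2" "w2 \<noteq> xs!1" "w2 \<noteq> xs!3" "nb V w2 \<noteq> {xs!2}"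
  shows "g (card V - io V) \<le> i_max V E"
proof -
  obtain x2 where x2: "x2 \<in> V" "x2 \<notin> set xs" "x2 \<noteq> w2" "nb V w2 = {xs!2, x2}" "nb V x2 = {w2}"
    using droot[OF V twf p mx l2' l4 w2] by blast
  have w2F: "w2 \<notin> set xs" using lp_2(1)[OF V twf p mx l2' l4 w2(1) w2(2) w2(3) w2(4)] .
  have w2d: "w2 \<noteq> xs!0" "w2 \<noteq> xs!1" "w2 \<noteq> xs!2" "w2 \<noteq> xs!3" using w2F xset by auto
  have x2d: "x2 \<noteq> xs!0" "x2 \<noteq> xs!1" "x2 \<noteq> xs!2" "x2 \<noteq> xs!3" using x2(2) xset by auto
  define X1 where "X1 = {xs!0, xs!1}"
  define X2 where "X2 = {xs!0, xs!1, xs!2}"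
  define X3 where "X3 = {xs!0, xs!1, xs!2, w2, x2}"
  note DB = del_bound[OF V twf IH]
  have fin2: "finite (V - X2)" using finV by simp
  have x2in: "x2 \<in> V - X2" using x2 x2d unfolding X2_def by auto
  have w2in: "w2 \<in> V - X2" using w2 w2d unfolding X2_def by auto
  have nbx2: "nb (V - X2) x2 = {w2}" using x2(5) w2in unfolding nb_del by auto
  have nbw2: "nb (V - X2) w2 = {x2}" using x2(4) x2in unfolding nb_del X2_def by auto
  have "i_max (V - X2) E = i_max (V - X2 - {x2, w2}) E + i_max (V - X2 - insert x2 (insert w2 (nb (V - X2) w2))) E"
    by (rule leaf_lemma[OF fin2 x2in nbx2])
  moreover have "V - X2 - {x2, w2} = V - X3" unfolding X2_def X3_def by auto
  moreover have "insert x2 (insert w2 (nb (V - X2) w2)) = {x2, w2}" using nbw2 by auto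
  ultimately have eq2: "i_max (V - X2) E = 2 * i_max (V - X3) E" by simp
  have B1: "g (card V - io V - card X1 - card ({}::'a set)) \<le> i_max (V - X1) E"
  proof (rule DB)
    show "X1 \<subseteq> V" "X1 \<noteq> {}" using xin unfolding X1_def by auto
    show "{} \<subseteq> V" by simp
  next
    fix c assume c: "c \<in> V - X1 - {}" and h: "nb V c \<inter> X1 \<noteq> {}"
    obtain x where x: "x \<in> X1" "c \<in> nb V x" using nb_hit[of c V X1] c h xin unfolding X1_def by auto
    have "c = xs!2" using x c nb0 nb1 unfolding X1_def by auto
    moreover have "goodp (V - X1) (xs!2)"
    proof (rule good_deg2[of _ _ w2 "xs!3"])
      show "V - X1 \<subseteq> V0" using V by auto
      show "xs!2 \<in> V - X1" using xin xdist unfolding X1_def by auto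
      show "w2 \<in> nb (V - X1) (xs!2)" using w2 w2d unfolding nb_def X1_def by auto
      show "xs!3 \<in> nb (V - X1) (xs!2)" using xin xE xdist unfolding nb_def X1_def by auto
      show "w2 \<noteq> xs!3" by (rule w2(4))
    qed
    ultimately show "goodp (V - X1) c" by simp
  qed
  have cX1: "card X1 = 2" using xdist unfolding X1_def by auto
  define Bad where "Bad = {u\<in>V. nb V u = {xs!2}} \<union> {xs!3}"
  have cBad: "card Bad \<le> 2"
  proof -
    have "card Bad \<le> card {u\<in>V. nb V u = {xs!2}} + card {xs!3}" unfolding Bad_def by (rule card_Un_le)
    then show ?thesis using card_leaves[of "xs!2"] by simp
  qed
  have B3: "g (card V - io V - card X3 - card Bad) \<le> i_max (V - X3) E"
  proof (rule DB)
    show "X3 \<subseteq> V" "X3 \<noteq> {}" using xin w2 x2 unfolding X3_def by auto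
    show "Bad \<subseteq> V" using xin unfolding Bad_def by auto
  next
    fix c assume c: "c \<in> V - X3 - Bad" and h: "nb V c \<inter> X3 \<noteq> {}"
    have cV: "c \<in> V" using c by simp
    obtain x where x: "x \<in> X3" "c \<in> nb V x" using nb_hit[of c V X3] c h xin w2 x2 unfolding X3_def by auto
    have cx: "c \<notin> X3" "c \<noteq> xs!3" "nb V c \<noteq> {xs!2}" using c unfolding Bad_def by auto
    have "x = xs!2"
    proof (rule ccontr)
      assume "x \<noteq> xs!2"
      then have "x = xs!0 \<or> x = xs!1 \<or> x = w2 \<or> x = x2" using x unfolding X3_def by auto
      then have "c \<in> X3" using x nb0 nb1 x2 unfolding X3_def by auto
      then show False using cx by simp
    qed
    then have cE: "E (xs!2) c" using x unfolding nb_def by simp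
    have c1: "c \<noteq> xs!1" using cx unfolding X3_def by auto
    obtain w where w: "w \<in> V" "w \<notin> set xs" "w \<noteq> c" "nb V c = {xs!2, w}" "nb V w = {c}"
      using droot[OF V twf p mx l2' l4 cV cE c1 cx(2) cx(3)] by blast
    have "w \<noteq> w2"
    proof
      assume "w = w2"
      then have "{xs!2, x2} = {c}" using w x2 by simp
      then show False using x2d by auto
    qed
    moreover have "w \<noteq> x2"
    proof
      assume "w = x2"
      then have "{w2} = {c}" using w x2 by simp
      then show False using cx unfolding X3_def by auto
    qed
    ultimately have wX: "w \<notin> X3" using w(2) xset unfolding X3_def by auto
    have nbc: "nb (V - X3) c = {w}" using w(4) w(1) wX unfolding nb_del X3_def by auto
    show "goodp (V - X3) c" by (rule good_leaf[OF _ _ nbc]) (use c w in auto)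
  qed
  have cX3: "card X3 = 5" using xdist w2d x2d x2(3) unfolding X3_def by auto
  have "g (card V - io V) \<le> g (card V - io V - 2) + 2 * g (card V - io V - 7)" by (rule g_A)
  also have "g (card V - io V - 2) \<le> i_max (V - X1) E" using B1 cX1 by simp
  also have "g (card V - io V - 7) \<le> g (card V - io V - card X3 - card Bad)"
    by (rule g_mono) (use cX3 cBad in linarith)
  also have "\<dots> \<le> i_max (V - X3) E" by (rule B3)
  finally have "g (card V - io V) \<le> i_max (V - X1) E + 2 * i_max (V - X3) E" by simp
  also have "\<dots> = i_max V E" using eq1 eq2 unfolding X1_def X2_def by simp
  finally show ?thesis .
qed


lemma caseB:
  assumes nb2: "nb V (xs!2) = {xs!1, xs!3}"
  shows "g (card V - io V) \<le> i_max V E"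
proof -
  define X1 where "X1 = {xs!0, xs!1}"
  define X2 where "X2 = {xs!0, xs!1, xs!2}"
  note DB = del_bound[OF V twf IH]
  have X1V: "X1 \<subseteq> V" "X1 \<noteq> {}" using xin unfolding X1_def by auto
  have X2V: "X2 \<subseteq> V" "X2 \<noteq> {}" using xin unfolding X2_def by auto
  have cX1: "card X1 = 2" using xdist unfolding X1_def by auto
  have cX2: "card X2 = 3" using xdist unfolding X2_def by auto
  have adj1: "c = xs!2" if cc: "c \<in> V - X1" "nb V c \<inter> X1 \<noteq> {}" for c
  proof -
    obtain x where x: "x \<in> X1" "c \<in> nb V x" using nb_hit[of c V X1] cc X1V by auto
    then show ?thesis using cc nb0 nb1 unfolding X1_def by auto
  qed
  have adj2: "c = xs!3" if cc: "c \<in> V - X2" "nb V c \<inter> X2 \<noteq> {}" for c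
  proof -
    obtain x where x: "x \<in> X2" "c \<in> nb V x" using nb_hit[of c V X2] cc X2V by auto
    then show ?thesis using cc nb0 nb1 nb2 unfolding X2_def by auto
  qed
  have m4: "4 \<le> card V - io V"
  proof -
    have "card {xs!0, xs!1, xs!2, xs!3} = 4" using xdist by auto
    moreover have "card {xs!0, xs!1, xs!2, xs!3} \<le> card V - io V" by (rule mge) (use xin xne in auto)
    ultimately show ?thesis by simp
  qed
  show ?thesis
  proof (cases "\<exists>z\<in>V. z \<noteq> xs!2 \<and> nb V z = {xs!3}")
    case True
    then obtain z where z: "z \<in> V" "z \<noteq> xs!2" "nb V z = {xs!3}" by blast
    have B1: "g (card V - io V - card X1 - card {xs!2}) \<le> i_max (V - X1) E"
    proof (rule DB)
      show "X1 \<subseteq> V" "X1 \<noteq> {}" using X1V by auto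
    next
      show "{xs!2} \<subseteq> V" using xin by auto
    next
      fix c assume "c \<in> V - X1 - {xs!2}" "nb V c \<inter> X1 \<noteq> {}"
      then show "goodp (V - X1) c" using adj1 by blast
    qed
    have zX: "z \<noteq> xs!0" "z \<noteq> xs!1"
    proof -
      show "z \<noteq> xs!0" using z nb0 xdist by auto
      show "z \<noteq> xs!1"
      proof
        assume "z = xs!1"
        then have "{xs!0, xs!2} = {xs!3}" using z nb1 by simp
        then show False using xdist by auto
      qed
    qed
    have B2: "g (card V - io V - card X2 - card ({}::'a set)) \<le> i_max (V - X2) E"
    proof (rule DB)
      show "X2 \<subseteq> V" "X2 \<noteq> {}" using X2V by auto
    next
      show "{} \<subseteq> V" by simp
    next
      fix c assume c: "c \<in> V - X2 - {}" "nb V c \<inter> X2 \<noteq> {}"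
      then have c3: "c = xs!3" using adj2 by blast
      have zin: "z \<in> nb (V - X2) (xs!3)" using z zX symE unfolding nb_def X2_def by auto
      show "goodp (V - X2) c"
      proof (cases "\<exists>q\<in>nb (V - X2) (xs!3). q \<noteq> z")
        case True
        then obtain q where q: "q \<in> nb (V - X2) (xs!3)" "q \<noteq> z" by blast
        show ?thesis unfolding c3
          by (rule good_deg2[OF _ _ zin q(1) q(2)[symmetric]]) (use V xin xdist in \<open>auto simp: X2_def\<close>)
      next
        case False
        then have "nb (V - X2) (xs!3) = {z}" using zin by blast
        then show ?thesis unfolding c3
          by (rule good_leaf[of "V - X2" V "xs!3" z, rotated 2]) (use z xin xdist in \<open>auto simp: X2_def\<close>)
      qed
    qed
    have "g (card V - io V) \<le> 2 * g (card V - io V - 3)" by (rule g_B2[OF m4])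
    also have "\<dots> \<le> i_max (V - X1) E + i_max (V - X2) E"
    proof -
      have h1: "card V - io V - card X1 - card {xs!2} = card V - io V - 3" using cX1 by simp
      have h2: "card V - io V - card X2 - card ({}::'a set) = card V - io V - 3" using cX2 by simp
      show ?thesis using B1[unfolded h1] B2[unfolded h2] by simp
    qed
    also have "\<dots> = i_max V E" using eq1 unfolding X1_def X2_def by simp
    finally show ?thesis .
  next
    case False
    have B1: "g (card V - io V - card X1 - card ({}::'a set)) \<le> i_max (V - X1) E"
    proof (rule DB)
      show "X1 \<subseteq> V" "X1 \<noteq> {}" using X1V by auto
    next
      show "{} \<subseteq> V" by simp
    next
      fix c assume "c \<in> V - X1 - {}" "nb V c \<inter> X1 \<noteq> {}"
      then have c2: "c = xs!2" using adj1 by blast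
      have n2: "nb (V - X1) (xs!2) = {xs!3}" using nb2 xdist unfolding nb_del X1_def by auto
      show "goodp (V - X1) c" unfolding c2 goodp_def
      proof (intro conjI ballI impI)
        show "nb (V - X1) (xs!2) \<noteq> {}" using n2 by simp
      next
        fix z assume z: "z \<in> V - X1" "z \<noteq> xs!2"
        show "nb (V - X1) z \<noteq> nb (V - X1) (xs!2)"
        proof
          assume e: "nb (V - X1) z = nb (V - X1) (xs!2)"
          have "nb V z \<inter> X1 = {}"
          proof (rule ccontr)
            assume "nb V z \<inter> X1 \<noteq> {}"
            then have "z = xs!2" using adj1 z by blast
            then show False using z by simp
          qed
          then have "nb V z = {xs!3}" using e n2 unfolding nb_del by blast
          then show False using False z by auto
        qed
      qed
    qed
    have B2: "g (card V - io V - card X2 - card {xs!3}) \<le> i_max (V - X2) E"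
    proof (rule DB)
      show "X2 \<subseteq> V" "X2 \<noteq> {}" using X2V by auto
    next
      show "{xs!3} \<subseteq> V" using xin by simp
    next
      fix c assume "c \<in> V - X2 - {xs!3}" "nb V c \<inter> X2 \<noteq> {}"
      then show "goodp (V - X2) c" using adj2 by blast
    qed
    have "g (card V - io V) \<le> g (card V - io V - 2) + g (card V - io V - 4)" by (rule g_B1)
    also have "\<dots> \<le> i_max (V - X1) E + i_max (V - X2) E"
    proof -
      have h1: "card V - io V - card X1 - card ({}::'a set) = card V - io V - 2" using cX1 by simp
      have h2: "card V - io V - card X2 - card {xs!3} = card V - io V - 4" using cX2 by simp
      show ?thesis using B1[unfolded h1] B2[unfolded h2] by simp
    qed
    also have "\<dots> = i_max V E" using eq1 unfolding X1_def X2_def by simp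
    finally show ?thesis .
  qed
qed


lemma caseC:
  assumes y: "y \<in> V" "nb V y = {xs!2}" "y \<noteq> xs!1" "y \<noteq> xs!3"
    and nb2: "nb V (xs!2) = {xs!1, xs!3, y}"
  shows "g (card V - io V) \<le> i_max V E"
proof -
  define X1 where "X1 = {xs!0, xs!1}"
  define X2 where "X2 = {xs!0, xs!1, xs!2}"
  define X4 where "X4 = {xs!0, xs!1, xs!2, y}"
  define X5 where "X5 = {xs!0, xs!1, xs!2, y, xs!3}"
  note DB = del_bound[OF V twf IH]
  have y0: "y \<noteq> xs!0" using y nb0 xdist by auto
  have y2: "y \<noteq> xs!2" using y irr unfolding nb_def by auto
  have X1V: "X1 \<subseteq> V" "X1 \<noteq> {}" using xin unfolding X1_def by auto
  have X2V: "X2 \<subseteq> V" "X2 \<noteq> {}" using xin unfolding X2_def by auto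
  have cX1: "card X1 = 2" using xdist unfolding X1_def by auto
  have cX2: "card X2 = 3" using xdist unfolding X2_def by auto
  have adj1: "c = xs!2" if cc: "c \<in> V - X1" "nb V c \<inter> X1 \<noteq> {}" for c
  proof -
    obtain x where x: "x \<in> X1" "c \<in> nb V x" using nb_hit[of c V X1] cc X1V by auto
    then show ?thesis using cc nb0 nb1 unfolding X1_def by auto
  qed
  have adj2: "c = xs!3 \<or> c = y" if cc: "c \<in> V - X2" "nb V c \<inter> X2 \<noteq> {}" for c
  proof -
    obtain x where x: "x \<in> X2" "c \<in> nb V x" using nb_hit[of c V X2] cc X2V by auto
    then show ?thesis using cc nb0 nb1 nb2 unfolding X2_def by auto
  qed
  have B1: "g (card V - io V - card X1 - card ({}::'a set)) \<le> i_max (V - X1) E"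
  proof (rule DB)
    show "X1 \<subseteq> V" "X1 \<noteq> {}" using X1V by auto
    show "{} \<subseteq> V" by simp
  next
    fix c assume "c \<in> V - X1 - {}" "nb V c \<inter> X1 \<noteq> {}"
    then have c2: "c = xs!2" using adj1 by blast
    show "goodp (V - X1) c" unfolding c2
    proof (rule good_deg2[of _ _ y "xs!3"])
      show "V - X1 \<subseteq> V0" using V by auto
      show "xs!2 \<in> V - X1" using xin xdist unfolding X1_def by auto
      show "y \<in> nb (V - X1) (xs!2)" using nb2 y y0 unfolding nb_del X1_def by auto
      show "xs!3 \<in> nb (V - X1) (xs!2)" using nb2 xdist unfolding nb_del X1_def by auto
      show "y \<noteq> xs!3" by (rule y(4))
    qed
  qed
  have h1: "card V - io V - card X1 - card ({}::'a set) = card V - io V - 2" using cX1 by simp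
  note B1' = B1[unfolded h1]
  show ?thesis
  proof (cases "goodp (V - X2) (xs!3)")
    case True
    have B2: "g (card V - io V - card X2 - card {y}) \<le> i_max (V - X2) E"
    proof (rule DB)
      show "X2 \<subseteq> V" "X2 \<noteq> {}" using X2V by auto
      show "{y} \<subseteq> V" using y by simp
    next
      fix c assume "c \<in> V - X2 - {y}" "nb V c \<inter> X2 \<noteq> {}"
      then have "c = xs!3" using adj2 by blast
      then show "goodp (V - X2) c" using True by simp
    qed
    have h2: "card V - io V - card X2 - card {y} = card V - io V - 4" using cX2 by simp
    have "g (card V - io V) \<le> g (card V - io V - 2) + g (card V - io V - 4)" by (rule g_B1)
    also have "\<dots> \<le> i_max (V - X1) E + i_max (V - X2) E" using B1' B2[unfolded h2] by simp
    also have "\<dots> = i_max V E" using eq1 unfolding X1_def X2_def by simp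
    finally show ?thesis .
  next
    case False
    define H where "H = V - X2"
    have yH: "nb H y = {}" using y unfolding H_def nb_del X2_def by auto
    have x3H: "xs!3 \<in> H" using xin xdist unfolding H_def X2_def by auto
    have ne3: "nb H (xs!3) \<noteq> {}"
    proof
      assume e: "nb H (xs!3) = {}"
      have "nb V (xs!3) = {xs!2}"
      proof
        show "{xs!2} \<subseteq> nb V (xs!3)" using xE xin unfolding nb_def by auto
        show "nb V (xs!3) \<subseteq> {xs!2}"
        proof
          fix q assume q: "q \<in> nb V (xs!3)"
          then have "q \<in> X2" using e unfolding H_def nb_del by blast
          moreover have "q \<noteq> xs!0"
          proof
            assume "q = xs!0"
            then have "E (xs!0) (xs!3)" using q symE unfolding nb_def by blast
            then have "xs!3 \<in> nb V (xs!0)" using xin unfolding nb_def by auto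
            then show False using nb0 xdist by auto
          qed
          moreover have "q \<noteq> xs!1"
          proof
            assume "q = xs!1"
            then have "E (xs!1) (xs!3)" using q symE unfolding nb_def by blast
            then have "xs!3 \<in> nb V (xs!1)" using xin unfolding nb_def by auto
            then show False using nb1 xdist by auto
          qed
          ultimately show "q \<in> {xs!2}" unfolding X2_def by auto
        qed
      qed
      then have "xs!3 = y" using inj_onD[OF twf] y xin by auto
      then show False using y by simp
    qed
    obtain z where z: "z \<in> H" "z \<noteq> xs!3" "nb H z = nb H (xs!3)"
      using False ne3 unfolding goodp_def H_def by blast
    obtain t where t: "t \<in> nb H (xs!3)" using ne3 by blast
    have single: "nb H (xs!3) = {t}"
    proof (rule ccontr)
      assume "nb H (xs!3) \<noteq> {t}"
      then obtain q where q: "q \<in> nb H (xs!3)" "q \<noteq> t" using t by blast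
      have "goodp H (xs!3)" by (rule good_deg2[OF _ x3H t q(1) q(2)[symmetric]]) (use V in \<open>auto simp: H_def\<close>)
      then show False using False unfolding H_def by simp
    qed
    have zy: "z \<noteq> y" using z yH single by auto
    have zX: "z \<notin> X2" "z \<in> V" using z unfolding H_def by auto
    have nbz: "nb V z = {t}"
    proof -
      have "nb V z \<inter> X2 = {}"
      proof (rule ccontr)
        assume "nb V z \<inter> X2 \<noteq> {}"
        then have "z = xs!3 \<or> z = y" using adj2 zX by blast
        then show False using z zy by simp
      qed
      then show ?thesis using z single unfolding H_def nb_del by blast
    qed
    have tH: "t \<in> V" "t \<notin> X2" "E (xs!3) t" using t unfolding H_def nb_def by auto
    have ty: "t \<noteq> y"
    proof
      assume "t = y"
      then have "E y (xs!3)" using tH symE by blast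
      then have "xs!3 \<in> nb V y" using xin unfolding nb_def by auto
      then show False using y xdist by auto
    qed
    have t3: "t \<noteq> xs!3" using tH irr by auto
    have Ezt: "E z t" "E t z" using nbz symE unfolding nb_def by auto
    have nb3: "nb V (xs!3) \<subseteq> X2 \<union> {t}" using single unfolding H_def nb_del by blast
    have fin1: "finite (V - X1)" using finV by simp
    have yin1: "y \<in> V - X1" using y y0 unfolding X1_def by auto
    have nby1: "nb (V - X1) y = {xs!2}" using y xdist unfolding nb_del X1_def by auto
    have nb21: "nb (V - X1) (xs!2) = {xs!3, y}" using nb2 xdist y0 y unfolding nb_del X1_def by auto
    have "i_max (V - X1) E = i_max (V - X1 - {y, xs!2}) E + i_max (V - X1 - insert y (insert (xs!2) (nb (V - X1) (xs!2)))) E"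
      by (rule leaf_lemma[OF fin1 yin1 nby1])
    moreover have "V - X1 - {y, xs!2} = V - X4" unfolding X1_def X4_def by auto
    moreover have "insert y (insert (xs!2) (nb (V - X1) (xs!2))) = {y, xs!2, xs!3}" using nb21 by auto
    moreover have "V - X1 - {y, xs!2, xs!3} = V - X5" unfolding X1_def X5_def by auto
    ultimately have eqA: "i_max (V - X1) E = i_max (V - X4) E + i_max (V - X5) E" by simp
    have "i_max (V - X2) E = i_max (V - X2 - {y}) E"
      by (rule iso_lemma) (use finV y y0 y2 yH in \<open>auto simp: H_def X2_def\<close>)
    moreover have "V - X2 - {y} = V - X4" unfolding X2_def X4_def by auto
    ultimately have eqB: "i_max (V - X2) E = i_max (V - X4) E" by simp
    have X4V: "X4 \<subseteq> V" using xin y unfolding X4_def by auto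
    have X5V: "X5 \<subseteq> V" using xin y unfolding X5_def by auto
    have cX4: "card X4 = 4" using xdist y y0 y2 unfolding X4_def by auto
    have cX5: "card X5 = 5" using xdist y y0 y2 unfolding X5_def by auto
    have B4: "g (card V - io V - card X4 - card {xs!3}) \<le> i_max (V - X4) E"
    proof (rule DB)
      show "X4 \<subseteq> V" "X4 \<noteq> {}" using X4V unfolding X4_def by auto
      show "{xs!3} \<subseteq> V" using xin by simp
    next
      fix c assume c: "c \<in> V - X4 - {xs!3}" "nb V c \<inter> X4 \<noteq> {}"
      obtain x where x: "x \<in> X4" "c \<in> nb V x" using nb_hit[of c V X4] c X4V by auto
      then have False using c nb0 nb1 nb2 y unfolding X4_def by auto
      then show "goodp (V - X4) c" ..
    qed
    have B5: "g (card V - io V - card X5 - card ({}::'a set)) \<le> i_max (V - X5) E"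
    proof (rule DB)
      show "X5 \<subseteq> V" "X5 \<noteq> {}" using X5V unfolding X5_def by auto
      show "{} \<subseteq> V" by simp
    next
      fix c assume c: "c \<in> V - X5 - {}" "nb V c \<inter> X5 \<noteq> {}"
      obtain x where x: "x \<in> X5" "c \<in> nb V x" using nb_hit[of c V X5] c X5V by auto
      have ct: "c = t"
      proof (cases "x = xs!3")
        case True
        then have "c \<in> X2 \<union> {t}" using x nb3 by blast
        then show ?thesis using c unfolding X2_def X5_def by auto
      next
        case False
        then have False using x c nb0 nb1 nb2 y unfolding X5_def by auto
        then show ?thesis ..
      qed
      have zin: "z \<in> nb (V - X5) t" using zX zy z Ezt unfolding nb_def X5_def X2_def by auto
      have tin: "t \<in> V - X5" using tH ty t3 unfolding X5_def X2_def by auto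
      show "goodp (V - X5) c"
      proof (cases "\<exists>q\<in>nb (V - X5) t. q \<noteq> z")
        case True
        then obtain q where q: "q \<in> nb (V - X5) t" "q \<noteq> z" by blast
        show ?thesis unfolding ct
          by (rule good_deg2[OF _ tin zin q(1) q(2)[symmetric]]) (use V in auto)
      next
        case False
        then have nbt: "nb (V - X5) t = {z}" using zin by blast
        show ?thesis unfolding ct
          by (rule good_leaf[OF _ tin nbt]) (use nbz in auto)
      qed
    qed
    have m6: "6 \<le> card V - io V"
    proof -
      have tX: "t \<noteq> xs!0" "t \<noteq> xs!1" "t \<noteq> xs!2" using tH(2) unfolding X2_def by auto
      have "card {xs!0, xs!1, xs!2, xs!3, y, t} = 6" using xdist y0 y2 y(3) y(4) ty t3 tX by simp
      moreover have "card {xs!0, xs!1, xs!2, xs!3, y, t} \<le> card V - io V"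
      proof (rule mge)
        show "{xs!0, xs!1, xs!2, xs!3, y, t} \<subseteq> V" using xin y(1) tH(1) by simp
        have "E t (xs!3)" using tH(3) by (rule symE)
        then have "nb V t \<noteq> {}" using xin unfolding nb_def by blast
        then show "\<forall>x\<in>{xs!0, xs!1, xs!2, xs!3, y, t}. nb V x \<noteq> {}" using xne y(2) by simp
      qed
      ultimately show ?thesis by simp
    qed
    have h4: "card V - io V - card X4 - card {xs!3} = card V - io V - 5" using cX4 by simp
    have h5: "card V - io V - card X5 - card ({}::'a set) = card V - io V - 5" using cX5 by simp
    have "g (card V - io V) \<le> 3 * g (card V - io V - 5)" by (rule g_C[OF m6])
    also have "\<dots> \<le> 2 * i_max (V - X4) E + i_max (V - X5) E" using B4[unfolded h4] B5[unfolded h5] by simp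
    also have "\<dots> = i_max (V - X1) E + i_max (V - X2) E" using eqA eqB by simp
    also have "\<dots> = i_max V E" using eq1 unfolding X1_def X2_def by simp
    finally show ?thesis .
  qed
qed

end

lemma main_twf:
  assumes V: "V \<subseteq> V0" and twf: "inj_on (nb V) V"
    and IH: "\<And>V'. V' \<subset> V \<Longrightarrow> g (rr V' - io V') \<le> i_max V' E"
  shows "g (card V - io V) \<le> i_max V E"
proof -
  have fin: "finite V" using V fin0 finite_subset by blast
  note DB = del_bound[OF V twf IH]
  show ?thesis
  proof (cases "\<exists>a\<in>V. \<exists>b\<in>V. E a b")
    case False
    have iso: "nb V x = {}" if "x \<in> V" for x using False that unfolding nb_def by blast
    have cV: "card V \<le> io V"
    proof (cases "V = {}")
      case True then show ?thesis by simp
    next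
      case False
      then obtain x where x: "x \<in> V" by blast
      have "V \<subseteq> {x}"
      proof
        fix y assume y: "y \<in> V"
        have "nb V y = nb V x" using iso x y by simp
        then have "y = x" using inj_onD[OF twf] x y by blast
        then show "y \<in> {x}" by simp
      qed
      then have "card V \<le> 1" using card_mono[of "{x}" V] by simp
      moreover have "io V = 1" using io_1 iso x by blast
      ultimately show ?thesis by simp
    qed
    have "mis V V" unfolding mis_def using False by auto
    then have ne: "{S. mis V S} \<noteq> {}" by blast
    have "0 < card {S. mis V S}" using ne fin_mis[OF fin] by (simp add: card_gt_0_iff)
    then have "1 \<le> i_max V E" unfolding imax_eq by simp
    moreover have "card V - io V = 0" using cV by simp
    ultimately show ?thesis using g_small(1) by simp
  next
    case True
    then obtain a b where ab: "a \<in> V" "b \<in> V" "E a b" by blast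
    show ?thesis
    proof (cases "\<exists>u\<in>V. \<exists>v. nb V u = {v} \<and> nb V v = {u}")
      case True
      then obtain u v where u: "u \<in> V" "nb V u = {v}" "nb V v = {u}" by blast
      have v: "v \<in> V" "E u v" using u(2) unfolding nb_def by auto
      have uv: "u \<noteq> v" using v irr by auto
      have "i_max V E = i_max (V - {u, v}) E + i_max (V - insert u (insert v (nb V v))) E"
        by (rule leaf_lemma[OF fin u(1) u(2)])
      moreover have "insert u (insert v (nb V v)) = {u, v}" using u(3) by auto
      ultimately have eq: "i_max V E = 2 * i_max (V - {u, v}) E" by simp
      have B: "g (card V - io V - card {u, v} - card ({}::'a set)) \<le> i_max (V - {u, v}) E"
      proof (rule DB)
        show "{u, v} \<subseteq> V" "{u, v} \<noteq> {}" using u v by auto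
        show "{} \<subseteq> V" by simp
      next
        fix c assume c: "c \<in> V - {u, v} - {}" "nb V c \<inter> {u, v} \<noteq> {}"
        obtain x where x: "x \<in> {u, v}" "c \<in> nb V x" using nb_hit[of c V "{u,v}"] c u v by auto
        then have False using c u by auto
        then show "goodp (V - {u, v}) c" ..
      qed
      have h: "card V - io V - card {u, v} - card ({}::'a set) = card V - io V - 2" using uv by simp
      have "g (card V - io V) \<le> 2 * g (card V - io V - 2)" by (rule g_K2)
      also have "\<dots> \<le> i_max V E" using B[unfolded h] eq by simp
      finally show ?thesis .
    next
      case noK2: False
      have ab': "a \<noteq> b" using ab irr by auto
      have p0: "path V [a, b]" unfolding path_def using ab ab' by auto
      obtain xs where p: "path V xs" and mx: "\<And>ys. path V ys \<Longrightarrow> length ys \<le> length xs"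
        using longest[OF fin p0] by blast
      have l2: "2 \<le> length xs" using mx[OF p0] by simp
      have nb0: "nb V (xs!0) = {xs!1}" by (rule lp_nb0[OF V twf p mx l2])
      have A: "\<forall>i. Suc i < length xs \<longrightarrow> E (xs!i) (xs!Suc i)" using p unfolding path_def adjl_nth by blast
      have dx: "distinct xs" using p unfolding path_def by blast
      have l4: "4 \<le> length xs"
      proof (rule ccontr)
        assume "\<not> 4 \<le> length xs"
        then have "length xs = 2 \<or> length xs = 3" using l2 by linarith
        then show False
        proof
          assume l: "length xs = 2"
          have e01: "E (xs!0) (xs!1)" using A[rule_format, of 0] l by simp
          have e10: "E (xs!1) (xs!0)" using e01 by (rule symE)
          have "nb V (xs!1) = {xs!0}"
          proof
            show "nb V (xs!1) \<subseteq> {xs!0}" using lp_endR[OF V twf p mx l2] l unfolding nb_def by auto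
            show "{xs!0} \<subseteq> nb V (xs!1)" using e10 pin0[OF V twf p mx l2] unfolding nb_def by auto
          qed
          then show False using noK2 nb0 pin0[OF V twf p mx l2] by blast
        next
          assume l: "length xs = 3"
          have e12: "E (xs!1) (xs!2)" using A[rule_format, of 1] l by (simp add: eval_nat_numeral)
          have e21: "E (xs!2) (xs!1)" using e12 by (rule symE)
          have x2V: "xs!2 \<in> V" using p l unfolding path_def by auto
          have "nb V (xs!2) = {xs!1}"
          proof
            show "nb V (xs!2) \<subseteq> {xs!1}" using lp_endR[OF V twf p mx l2] l unfolding nb_def by auto
            show "{xs!1} \<subseteq> nb V (xs!2)" using e21 pin0[OF V twf p mx l2] unfolding nb_def by auto
          qed
          then have "xs!2 = xs!0" using inj_onD[OF twf] nb0 x2V pin0[OF V twf p mx l2] by simp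
          then show False using nth_eq_iff_index_eq[OF dx, of 2 0] l by simp
        qed
      qed
      have CA: "\<And>w2. w2 \<in> V \<Longrightarrow> E (xs!2) w2 \<Longrightarrow> w2 \<noteq> xs!1 \<Longrightarrow> w2 \<noteq> xs!3 \<Longrightarrow> nb V w2 \<noteq> {xs!2}
          \<Longrightarrow> g (card V - io V) \<le> i_max V E"
        by (rule caseA[of V xs]) (use V twf IH p mx l4 in blast)+
      have CB: "nb V (xs!2) = {xs!1, xs!3} \<Longrightarrow> g (card V - io V) \<le> i_max V E"
        by (rule caseB[of V xs]) (use V twf IH p mx l4 in blast)+
      have CC: "\<And>y. y \<in> V \<Longrightarrow> nb V y = {xs!2} \<Longrightarrow> y \<noteq> xs!1 \<Longrightarrow> y \<noteq> xs!3 \<Longrightarrow>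
          nb V (xs!2) = {xs!1, xs!3, y} \<Longrightarrow> g (card V - io V) \<le> i_max V E"
        by (rule caseC[of V xs]) (use V twf IH p mx l4 in blast)+
      have x1: "xs!1 \<in> V" "xs!3 \<in> V" "xs!2 \<in> V" using p l4 unfolding path_def by auto
      have e21: "E (xs!2) (xs!1)" "E (xs!2) (xs!3)"
      proof -
        have "E (xs!1) (xs!2)" using A[rule_format, of 1] l4 by (simp add: eval_nat_numeral)
        then show "E (xs!2) (xs!1)" by (rule symE)
        show "E (xs!2) (xs!3)" using A[rule_format, of 2] l4 by (simp add: eval_nat_numeral)
      qed
      show ?thesis
      proof (cases "\<exists>w2. w2 \<in> V \<and> E (xs!2) w2 \<and> w2 \<noteq> xs!1 \<and> w2 \<noteq> xs!3 \<and> nb V w2 \<noteq> {xs!2}")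
        case True
        then obtain w2 where w2: "w2 \<in> V" "E (xs!2) w2" "w2 \<noteq> xs!1" "w2 \<noteq> xs!3" "nb V w2 \<noteq> {xs!2}" by blast
        show ?thesis by (rule CA[OF w2])
      next
        case allL: False
        show ?thesis
        proof (cases "\<exists>y. y \<in> nb V (xs!2) \<and> y \<noteq> xs!1 \<and> y \<noteq> xs!3")
          case True
          then obtain y where y: "y \<in> nb V (xs!2)" "y \<noteq> xs!1" "y \<noteq> xs!3" by blast
          have yV: "y \<in> V" "E (xs!2) y" using y unfolding nb_def by auto
          have nby: "nb V y = {xs!2}" using allL yV y by blast
          have nb2: "nb V (xs!2) = {xs!1, xs!3, y}"
          proof
            show "nb V (xs!2) \<subseteq> {xs!1, xs!3, y}"
            proof
              fix q assume q: "q \<in> nb V (xs!2)"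
              show "q \<in> {xs!1, xs!3, y}"
              proof (cases "q = xs!1 \<or> q = xs!3")
                case False
                have qV: "q \<in> V" "E (xs!2) q" using q unfolding nb_def by auto
                then have "nb V q = {xs!2}" using allL False by blast
                then have "q = y" using inj_onD[OF twf] nby qV yV by simp
                then show ?thesis by simp
              qed auto
            qed
            show "{xs!1, xs!3, y} \<subseteq> nb V (xs!2)"
              using y e21 x1 unfolding nb_def by auto
          qed
          show ?thesis by (rule CC[OF yV(1) nby y(2) y(3) nb2])
        next
          case False
          have nb2: "nb V (xs!2) = {xs!1, xs!3}"
          proof
            show "nb V (xs!2) \<subseteq> {xs!1, xs!3}" using False by blast
            show "{xs!1, xs!3} \<subseteq> nb V (xs!2)" using e21 x1 unfolding nb_def by auto
          qed
          show ?thesis by (rule CB[OF nb2])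
        qed
      qed
    qed
  qed
qed

lemma main: "V \<subseteq> V0 \<Longrightarrow> g (rr V - io V) \<le> i_max V E"
proof (induction "card V" arbitrary: V rule: less_induct)
  case less
  have fin: "finite V" using less.prems fin0 finite_subset by blast
  have IH: "g (rr V' - io V') \<le> i_max V' E" if V': "V' \<subset> V" for V'
  proof -
    have "card V' < card V" by (rule psubset_card_mono[OF fin V'])
    moreover have "V' \<subseteq> V0" using V' less.prems by blast
    ultimately show ?thesis using less.hyps by blast
  qed
  show ?case
  proof (cases "inj_on (nb V) V")
    case True
    have "rr V = card V" unfolding rr_def using card_image[OF True] by simp
    then show ?thesis using main_twf[OF less.prems True IH] by simp
  next
    case False
    then obtain u v where uv: "u \<in> V" "v \<in> V" "u \<noteq> v" "nb V u = nb V v" unfolding inj_on_def by blast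
    have "i_max V E = i_max (V - {v}) E" by (rule twin_imax[OF fin uv])
    moreover have "rr (V - {v}) = rr V" "io (V - {v}) = io V" using twin_rr[OF fin uv] by simp_all
    moreover have "g (rr (V - {v}) - io (V - {v})) \<le> i_max (V - {v}) E" using IH uv by blast
    ultimately show ?thesis by simp
  qed
qed

end

theorem corollary4p8:
  fixes V :: "'a set" and E :: "'a \<Rightarrow> 'a \<Rightarrow> bool"
  assumes "forest V E" and "twin_free V E" and "card V \<ge> 2"
  shows "i_max V E \<ge> f (card V - 1)"
proof -
  interpret FF V E by unfold_locales (rule assms(1))
  have twf: "inj_on (open_nbhd V E) V" using assms(2) unfolding twin_free_def inj_on_def by blast
  have "g (rr V - io V) \<le> i_max V E" by (rule main) simp
  moreover have "rr V = card V" unfolding rr_def using card_image[OF twf] by simp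
  moreover have "card V - 1 \<le> card V - io V" using io_le1 by (simp add: diff_le_mono2)
  ultimately have "g (card V - 1) \<le> i_max V E" using g_mono by (metis le_trans)
  then show ?thesis using f_le_g[of "card V - 1"] by simp
qed

end
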